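(* Let $\Omega\subset\mathbb{R}^n$ be a bounded domain and let $(u,v)$ solve $$u_t=d_1\Delta u+a_1u-b_1u^2-c_1uv,\qquad v_t=d_2\Delta v+\frac{a_2v}{1+k(x)u}-b_2v^2-c_2uv\quad\text{in }\Omega\times(0,\infty),$$ with $\partial_\nu u=\partial_\nu v=0$ on $\partial\Omega$ and constant initial data $u(x,0)\equiv c>0$, $v(x,0)\equiv d>0$, where $k$ satisfies the standing assumptions below. Let $\tilde k=\max_{x\in\overline\Omega}k(x)$. If $$\tilde k>\frac{a_2b_1^2-c_2a_1b_1}{a_1^2c_2}\quad\text{and}\quad\frac{a_1}{a_2}>\max\left\{\frac{b_1}{c_2},\frac{c_1}{b_2}\right\},$$ then $(u,v)$ converges uniformly on $\Omega$ to $(\frac{a_1}{b_1},0)$ as $t\to\infty$.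
   Context: Standing assumptions on $k$: $k\in C^1(\overline\Omega)$, $k\ge0$, and $k$ vanishes only on a set of Lebesgue measure zero. All parameters $a_i,b_i,c_i,d_i$ are positive. *)

theory Defs
  imports "HOL-Analysis.Analysis"
begin

definition grad :: "('a::euclidean_space \<Rightarrow> real) \<Rightarrow> 'a \<Rightarrow> 'a" where
  "grad f x = (\<Sum>b\<in>Basis. frechet_derivative f (at x) b *\<^sub>R b)"

definition laplacian :: "('a::euclidean_space \<Rightarrow> real) \<Rightarrow> 'a \<Rightarrow> real" where
  "laplacian f x = (\<Sum>b\<in>Basis. frechet_derivative (\<lambda>y. frechet_derivative f (at y) b) (at x) b)"

text \<open>phi is a global C^1 defining function of Omega: Omega = {phi < 0}, grad phi nonzero on {phi = 0}.
  The outward normal on the boundary is then grad phi / |grad phi|.\<close>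
definition C1_defining_function :: "('a::euclidean_space \<Rightarrow> real) \<Rightarrow> 'a set \<Rightarrow> bool" where
  "C1_defining_function \<phi> \<Omega> \<longleftrightarrow>
     (\<forall>x. \<phi> differentiable (at x)) \<and> continuous_on UNIV (grad \<phi>) \<and>
     \<Omega> = {x. \<phi> x < 0} \<and> (\<forall>x. \<phi> x = 0 \<longrightarrow> grad \<phi> x \<noteq> 0)"

definition bounded_C1_domain :: "'a::euclidean_space set \<Rightarrow> ('a \<Rightarrow> real) \<Rightarrow> bool" where
  "bounded_C1_domain \<Omega> \<phi> \<longleftrightarrow> \<Omega> \<noteq> {} \<and> open \<Omega> \<and> connected \<Omega> \<and> bounded \<Omega> \<and>
     C1_defining_function \<phi> \<Omega>"

definition C1_on_closure :: "('a::euclidean_space \<Rightarrow> real) \<Rightarrow> 'a set \<Rightarrow> bool" where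
  "C1_on_closure k \<Omega> \<longleftrightarrow> continuous_on (closure \<Omega>) k \<and>
     (\<forall>x\<in>closure \<Omega>. k differentiable (at x within closure \<Omega>)) \<and>
     (\<forall>b\<in>Basis. continuous_on (closure \<Omega>) (\<lambda>x. frechet_derivative k (at x within closure \<Omega>) b))"

definition is_classical_solution ::
  "'a::euclidean_space set \<Rightarrow> ('a \<Rightarrow> real) \<Rightarrow> ('a \<Rightarrow> real) \<Rightarrow>
   real \<Rightarrow> real \<Rightarrow> real \<Rightarrow> real \<Rightarrow> real \<Rightarrow> real \<Rightarrow> real \<Rightarrow> real \<Rightarrow> real \<Rightarrow> real \<Rightarrow>
   ('a \<Rightarrow> real \<Rightarrow> real) \<Rightarrow> ('a \<Rightarrow> real \<Rightarrow> real) \<Rightarrow> bool" where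
  "is_classical_solution \<Omega> \<phi> k a1 b1 c1 d1 a2 b2 c2 d2 c0 d0 u v \<longleftrightarrow>
     continuous_on (closure \<Omega> \<times> {0..}) (\<lambda>(x,t). u x t) \<and>
     continuous_on (closure \<Omega> \<times> {0..}) (\<lambda>(x,t). v x t) \<and>
     (\<forall>x\<in>closure \<Omega>. u x 0 = c0 \<and> v x 0 = d0) \<and>
     (\<forall>t>0. \<forall>x\<in>\<Omega>.
        (\<lambda>y. u y t) differentiable (at x) \<and> (\<lambda>y. v y t) differentiable (at x) \<and>
        (\<forall>b\<in>Basis. (\<lambda>y. frechet_derivative (\<lambda>z. u z t) (at y) b) differentiable (at x)) \<and>
        (\<forall>b\<in>Basis. (\<lambda>y. frechet_derivative (\<lambda>z. v z t) (at y) b) differentiable (at x)) \<and>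
        ((\<lambda>s. u x s) has_real_derivative
           (d1 * laplacian (\<lambda>y. u y t) x + a1 * u x t - b1 * (u x t)\<^sup>2 - c1 * u x t * v x t)) (at t) \<and>
        ((\<lambda>s. v x s) has_real_derivative
           (d2 * laplacian (\<lambda>y. v y t) x + a2 * v x t / (1 + k x * u x t)
            - b2 * (v x t)\<^sup>2 - c2 * u x t * v x t)) (at t)) \<and>
     (\<forall>t>0. \<forall>x\<in>frontier \<Omega>.
        (\<exists>D. ((\<lambda>y. u y t) has_derivative D) (at x within closure \<Omega>) \<and> D (grad \<phi> x) = 0) \<and>
        (\<exists>D. ((\<lambda>y. v y t) has_derivative D) (at x within closure \<Omega>) \<and> D (grad \<phi> x) = 0))"

end

theory Submission
  imports Defs
begin

lemma grad_has_derivative: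
  fixes \<phi> :: "'a::euclidean_space \<Rightarrow> real"
  assumes "\<phi> differentiable (at x)"
  shows "(\<phi> has_derivative (\<lambda>h. grad \<phi> x \<bullet> h)) (at x)"
proof -
  let ?f = "frechet_derivative \<phi> (at x)"
  have d: "(\<phi> has_derivative ?f) (at x)" using assms frechet_derivative_works by blast
  have lin: "linear ?f" using assms linear_frechet_derivative by blast
  have eq: "?f h = grad \<phi> x \<bullet> h" for h
  proof -
    have "?f h = ?f (\<Sum>b\<in>Basis. (h \<bullet> b) *\<^sub>R b)" by (simp add: euclidean_representation)
    also have "\<dots> = (\<Sum>b\<in>Basis. (h \<bullet> b) * ?f b)"
      using lin by (simp add: linear_sum linear_scale)
    also have "\<dots> = grad \<phi> x \<bullet> h"
      unfolding grad_def inner_sum_left inner_scaleR_left by (rule sum.cong) (simp_all add: inner_commute)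
    finally show ?thesis .
  qed
  have "?f = (\<lambda>h. grad \<phi> x \<bullet> h)" using eq by auto
  then show ?thesis using d by simp
qed

lemma frontier_phi_zero:
  assumes dom: "bounded_C1_domain \<Omega> \<phi>" and x: "x \<in> frontier \<Omega>"
  shows "\<phi> x = 0"
proof -
  have diff: "\<forall>x. \<phi> differentiable (at x)" and O: "\<Omega> = {x. \<phi> x < 0}" and op: "open \<Omega>"
    using dom unfolding bounded_C1_domain_def C1_defining_function_def by auto
  have cont: "continuous_on UNIV \<phi>"
    using diff differentiable_imp_continuous_within continuous_at_imp_continuous_on by blast
  have "closed {x. \<phi> x \<le> 0}"
    using cont by (simp add: closed_Collect_le continuous_on_const)
  then have "closure \<Omega> \<subseteq> {x. \<phi> x \<le> 0}" using O by (intro closure_minimal) auto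
  moreover have "x \<in> closure \<Omega>" "x \<notin> \<Omega>" using x op by (auto simp: frontier_def interior_open)
  ultimately show ?thesis using O by auto
qed

lemma geom:
  fixes \<Omega> :: "'a::euclidean_space set" and \<phi> :: "'a \<Rightarrow> real"
  assumes dom: "bounded_C1_domain \<Omega> \<phi>"
  shows "\<exists>\<delta>>0. \<exists>s1>0. {x. \<phi> x \<le> -\<delta>} \<noteq> {} \<and>
    (\<forall>x0\<in>frontier \<Omega>. \<forall>y. \<phi> y \<le> -\<delta> \<and> dist x0 y = infdist x0 {x. \<phi> x \<le> -\<delta>} \<longrightarrow>
        (x0 - y) \<bullet> grad \<phi> x0 > 0) \<and>
    (\<forall>x0\<in>frontier \<Omega>. \<forall>s. 0 < s \<and> s < s1 \<longrightarrow> x0 - s *\<^sub>R grad \<phi> x0 \<in> \<Omega>)"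
proof -
  have diff: "\<forall>x. \<phi> differentiable (at x)" and O: "\<Omega> = {x. \<phi> x < 0}" and op: "open \<Omega>"
    and gc: "continuous_on UNIV (grad \<phi>)" and gnz: "\<forall>x. \<phi> x = 0 \<longrightarrow> grad \<phi> x \<noteq> 0"
    and bd: "bounded \<Omega>" and ne: "\<Omega> \<noteq> {}"
    using dom unfolding bounded_C1_domain_def C1_defining_function_def by auto
  define g where "g = grad \<phi>"
  have fz: "\<And>x. x \<in> frontier \<Omega> \<Longrightarrow> \<phi> x = 0" using frontier_phi_zero[OF dom] by blast
  have cpF: "compact (frontier \<Omega>)" using bd by (simp add: compact_frontier_bounded)
  obtain m where m: "m > 0" "\<forall>x\<in>frontier \<Omega>. m \<le> norm (g x)"
  proof (cases "frontier \<Omega> = {}")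
    case True then show ?thesis using that[of 1] by auto
  next
    case False
    have "continuous_on (frontier \<Omega>) (\<lambda>x. norm (g x))"
      using gc unfolding g_def by (intro continuous_on_norm) (auto intro: continuous_on_subset)
    from continuous_attains_inf[OF cpF False this] obtain x1 where
      x1: "x1 \<in> frontier \<Omega>" "\<forall>y\<in>frontier \<Omega>. norm (g x1) \<le> norm (g y)" by blast
    have "g x1 \<noteq> 0" using gnz fz[OF x1(1)] unfolding g_def by auto
    then show ?thesis using that[of "norm (g x1)"] x1 by auto
  qed
  obtain M where M: "M > 0" "\<forall>x\<in>frontier \<Omega>. norm (g x) \<le> M"
  proof -
    have "compact (g ` frontier \<Omega>)"
      using gc cpF unfolding g_def by (intro compact_continuous_image) (auto intro: continuous_on_subset)
    then have "bounded (g ` frontier \<Omega>)" by (rule compact_imp_bounded)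
    then show ?thesis using that by (auto simp: bounded_pos)
  qed
  obtain R where R: "closure \<Omega> \<subseteq> cball 0 R"
  proof -
    obtain b where "b > 0" "\<forall>x\<in>closure \<Omega>. norm x \<le> b"
      using bd bounded_closure bounded_pos by metis
    then show ?thesis using that[of b] by (auto simp: subset_iff)
  qed
  have uc: "uniformly_continuous_on (cball 0 (R+1)) g"
    using gc unfolding g_def by (intro compact_uniformly_continuous) (auto intro: continuous_on_subset)
  obtain \<rho> where \<rho>: "\<rho> > 0" "\<forall>x\<in>cball 0 (R+1). \<forall>x'\<in>cball 0 (R+1). dist x' x < \<rho> \<longrightarrow> dist (g x') (g x) < m/4"
    using uc m(1) unfolding uniformly_continuous_on_def by (metis divide_pos_pos zero_less_numeral)
  define \<rho>' where "\<rho>' = min \<rho> 1"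
  have \<rho>': "\<rho>' > 0" "\<rho>' \<le> 1" "\<rho>' \<le> \<rho>" using \<rho> unfolding \<rho>'_def by auto
  have hd: "\<And>x. (\<phi> has_derivative (\<lambda>h. g x \<bullet> h)) (at x)"
    using grad_has_derivative diff unfolding g_def by blast
  have E: "norm (\<phi> y - \<phi> x0 - g x0 \<bullet> (y - x0)) \<le> norm (y - x0) * (m/4)"
    if x0: "x0 \<in> frontier \<Omega>" and y: "dist y x0 < \<rho>'" for x0 y
  proof -
    have x0c: "x0 \<in> cball 0 R" using x0 R unfolding frontier_def by auto
    have sub: "ball x0 \<rho>' \<subseteq> cball 0 (R+1)"
    proof
      fix z assume "z \<in> ball x0 \<rho>'"
      then have "dist x0 z < 1" using \<rho>' by auto
      moreover have "norm x0 \<le> R" using x0c by auto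
      ultimately show "z \<in> cball 0 (R+1)"
        by (simp add: dist_norm) (metis add_mono dist_commute dist_norm less_imp_le norm_triangle_sub order_trans add.commute)
    qed
    show ?thesis
    proof (rule differentiable_bound_linearization[where S="ball x0 \<rho>'" and f'="\<lambda>x h. g x \<bullet> h"])
      fix t :: real assume t: "t \<in> {0..1}"
      have "dist x0 (x0 + t *\<^sub>R (y - x0)) = t * dist y x0"
        using t by (simp add: dist_norm)
      also have "\<dots> \<le> dist y x0" using t by (simp add: mult_left_le_one_le)
      finally show "x0 + t *\<^sub>R (y - x0) \<in> ball x0 \<rho>'" using y by simp
    next
      fix x assume "x \<in> ball x0 \<rho>'"
      show "(\<phi> has_derivative (\<lambda>h. g x \<bullet> h)) (at x within ball x0 \<rho>')"
        using hd has_derivative_at_withinI by blast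
    next
      fix x assume xb: "x \<in> ball x0 \<rho>'"
      have "(\<lambda>h. g x \<bullet> h) - (\<lambda>h. g x0 \<bullet> h) = (\<lambda>h. (g x - g x0) \<bullet> h)"
        by (auto simp: fun_diff_def inner_diff_left)
      moreover have "onorm (\<lambda>h. (g x - g x0) \<bullet> h) \<le> norm (g x - g x0) * onorm (\<lambda>h::'a. h)"
        by (rule onorm_inner_right) (rule bounded_linear_ident)
      moreover have "norm (g x - g x0) < m/4"
      proof -
        have "x \<in> cball 0 (R+1)" "x0 \<in> cball 0 (R+1)" using sub xb \<rho>' by (auto simp: subset_iff)
        moreover have "dist x x0 < \<rho>" using xb \<rho>' by (simp add: dist_commute)
        ultimately show ?thesis using \<rho>(2) by (auto simp: dist_norm)
      qed
      ultimately show "onorm ((\<lambda>h. g x \<bullet> h) - (\<lambda>h. g x0 \<bullet> h)) \<le> m/4"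
        by (simp add: onorm_id)
    next
      show "x0 \<in> ball x0 \<rho>'" using \<rho>' by simp
    qed
  qed
  obtain p where p: "p \<in> \<Omega>" using ne by auto
  have php: "\<phi> p < 0" using p O by auto
  define \<delta> where "\<delta> = min (- \<phi> p) (\<rho>' * m / 4)"
  have \<delta>: "\<delta> > 0" "\<delta> \<le> - \<phi> p" "\<delta> \<le> \<rho>' * m / 4" using php \<rho>' m unfolding \<delta>_def by auto
  define S where "S = {x. \<phi> x \<le> -\<delta>}"
  have "p \<in> S" unfolding S_def using \<delta>(2) by simp
  then have Sne: "S \<noteq> {}" by auto
  define ts where "ts = 2 * \<delta> / m"
  have ts: "ts > 0" "ts < \<rho>'" "ts * m = 2 * \<delta>"
    using \<delta> m \<rho>' unfolding ts_def by (auto simp: field_simps)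
  have part1: "(x0 - y) \<bullet> g x0 > 0"
    if x0: "x0 \<in> frontier \<Omega>" and yS: "\<phi> y \<le> -\<delta>" and yd: "dist x0 y = infdist x0 S" for x0 y
  proof -
    have gm: "m \<le> norm (g x0)" using m x0 by auto
    then have gpos: "norm (g x0) > 0" using m by auto
    define q where "q = x0 - (ts / norm (g x0)) *\<^sub>R g x0"
    have dq: "dist q x0 = ts" using gpos ts unfolding q_def by (simp add: dist_norm)
    have e: "\<bar>\<phi> q - \<phi> x0 - g x0 \<bullet> (q - x0)\<bar> \<le> norm (q - x0) * (m/4)"
      using E[OF x0, of q] dq ts by simp
    have "\<phi> q \<le> \<phi> x0 + g x0 \<bullet> (q - x0) + norm (q - x0) * (m/4)"
      using abs_le_D1[OF e] by linarith
    also have "\<phi> x0 = 0" using fz x0 by auto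
    also have "g x0 \<bullet> (q - x0) = - ts * norm (g x0)"
      using gpos unfolding q_def by (simp add: power2_norm_eq_inner[symmetric] power2_eq_square)
    also have "norm (q - x0) = ts" using dq by (simp add: dist_norm)
    finally have "\<phi> q \<le> - ts * norm (g x0) + ts * (m / 4)" by simp
    also have "\<dots> \<le> - ts * m + ts * (m/4)"
    proof -
      have "ts * m \<le> ts * norm (g x0)" using gm ts(1) by (intro mult_left_mono) auto
      then show ?thesis by linarith
    qed
    also have "\<dots> \<le> -\<delta>" using ts \<delta> by (simp add: algebra_simps) 
    finally have "q \<in> S" unfolding S_def by simp
    then have "infdist x0 S \<le> dist x0 q" by (rule infdist_le)
    then have r: "dist y x0 \<le> ts" using yd dq by (simp add: dist_commute)
    have e: "\<bar>\<phi> y - \<phi> x0 - g x0 \<bullet> (y - x0)\<bar> \<le> norm (y - x0) * (m/4)"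
      using E[OF x0, of y] r ts by simp
    have "\<phi> y \<ge> \<phi> x0 + g x0 \<bullet> (y - x0) - norm (y - x0) * (m/4)"
      using abs_le_D2[OF e] by linarith
    then have "g x0 \<bullet> (y - x0) \<le> -\<delta> + norm (y - x0) * (m/4)" using yS fz[OF x0] by simp
    also have "norm (y - x0) * (m/4) \<le> ts * (m/4)" using r m by (simp add: dist_norm mult_right_mono)
    also have "ts * (m/4) = \<delta>/2" using ts by simp
    finally have "g x0 \<bullet> (y - x0) < 0" using \<delta> by simp
    then show ?thesis by (simp add: inner_diff_left inner_diff_right inner_commute)
  qed
  define s1 where "s1 = \<rho>' / M"
  have s1: "s1 > 0" using \<rho>' M unfolding s1_def by auto
  have part2: "x0 - s *\<^sub>R g x0 \<in> \<Omega>" if x0: "x0 \<in> frontier \<Omega>" and s: "0 < s" "s < s1" for x0 s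
  proof -
    have gm: "m \<le> norm (g x0)" "norm (g x0) \<le> M" using m M x0 by auto
    define y where "y = x0 - s *\<^sub>R g x0"
    have dy: "dist y x0 = s * norm (g x0)" using s unfolding y_def by (simp add: dist_norm)
    have "s * norm (g x0) \<le> s * M" using gm s by (simp add: mult_left_mono)
    also have "s * M < \<rho>'" using s M unfolding s1_def by (simp add: field_simps)
    finally have "dist y x0 < \<rho>'" using dy by simp
    from E[OF x0 this] have e: "\<bar>\<phi> y - \<phi> x0 - g x0 \<bullet> (y - x0)\<bar> \<le> norm (y - x0) * (m/4)"
      by simp
    have "\<phi> y \<le> \<phi> x0 + g x0 \<bullet> (y - x0) + norm (y - x0) * (m/4)"
      using abs_le_D1[OF e] by linarith
    also have "\<phi> x0 = 0" using fz x0 by auto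
    also have "g x0 \<bullet> (y - x0) = - s * (norm (g x0))^2"
      unfolding y_def by (simp add: power2_norm_eq_inner)
    also have "norm (y - x0) = s * norm (g x0)" using dy by (simp add: dist_norm)
    finally have "\<phi> y \<le> - s * (norm (g x0))^2 + s * norm (g x0) * (m/4)" by simp
    also have "\<dots> < 0"
    proof -
      have "s * norm (g x0) * (m/4) < s * norm (g x0) * norm (g x0)"
        using gm m s by (intro mult_strict_left_mono) (auto intro!: mult_pos_pos)
      then show ?thesis by (simp add: power2_eq_square algebra_simps)
    qed
    finally show ?thesis using O unfolding y_def by simp
  qed
  show ?thesis
    apply (rule exI[of _ \<delta>], rule conjI, rule \<delta>)
    apply (rule exI[of _ s1], rule conjI, rule s1)
    using Sne part1 part2 unfolding S_def g_def by blast
qed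

lemma second_deriv_max:
  fixes f F :: "real \<Rightarrow> real"
  assumes r: "r > 0" and mx: "\<forall>s. \<bar>s\<bar> < r \<longrightarrow> f s \<le> f 0"
    and df: "\<forall>s. \<bar>s\<bar> < r \<longrightarrow> (f has_real_derivative F s) (at s)"
    and dF: "(F has_real_derivative c) (at 0)"
  shows "c \<le> 0"
proof (rule ccontr)
  assume "\<not> c \<le> 0"
  then have c: "c > 0" by simp
  have "\<forall>y. \<bar>0 - y\<bar> < r \<longrightarrow> f y \<le> f 0" using mx by auto
  moreover have "(f has_real_derivative F 0) (at 0)" using df r by auto
  ultimately have F0: "F 0 = 0"
    using DERIV_local_max[where f=f and x=0 and l="F 0" and d=r] r by blast
  obtain e where e: "e > 0" "\<forall>h>0. h < e \<longrightarrow> F 0 < F (0 + h)"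
    using DERIV_pos_inc_right[OF dF c] by blast
  define h where "h = min e r / 2"
  have h: "h > 0" "h < e" "h < r" using e r unfolding h_def by auto
  obtain z where z: "0 < z" "z < h" "f h - f 0 = (h - 0) * F z"
    using MVT2[of 0 h f F] h df by force
  have "F z > 0" using e z h F0 by auto
  then have "h * F z > 0" using h by (simp add: mult_pos_pos)
  then have "f h > f 0" using z by simp
  moreover have "f h \<le> f 0" using mx h by auto
  ultimately show False by simp
qed

lemma right_deriv_max:
  fixes k :: "real \<Rightarrow> real"
  assumes r: "r > 0" and mx: "\<forall>s. 0 \<le> s \<and> s < r \<longrightarrow> k s \<le> k 0"
    and dk: "(k has_real_derivative c) (at 0 within {0..<r})"
  shows "c \<le> 0"
proof (rule ccontr)
  assume "\<not> c \<le> 0"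
  then have c: "c > 0" by simp
  obtain e where e: "e > 0" "\<forall>h>0. 0 + h \<in> {0..<r} \<longrightarrow> h < e \<longrightarrow> k 0 < k (0 + h)"
    using has_real_derivative_pos_inc_right[OF dk c] by blast
  define h where "h = min e r / 2"
  have h: "h > 0" "h < e" "h < r" using e r unfolding h_def by auto
  then have "k 0 < k h" using e by auto
  moreover have "k h \<le> k 0" using mx h by auto
  ultimately show False by simp
qed

lemma left_deriv_max:
  fixes g :: "real \<Rightarrow> real"
  assumes r: "r > 0" and mx: "\<forall>t. \<tau> - r < t \<and> t < \<tau> \<longrightarrow> g t \<le> g \<tau>"
    and dg: "(g has_real_derivative c) (at \<tau>)"
  shows "c \<ge> 0"
proof (rule ccontr)
  assume "\<not> c \<ge> 0"
  then have c: "c < 0" by simp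
  obtain e where e: "e > 0" "\<forall>h>0. \<tau> - h \<in> UNIV \<longrightarrow> h < e \<longrightarrow> g \<tau> < g (\<tau> - h)"
    using has_real_derivative_neg_dec_left[OF dg c] by blast
  define h where "h = min e r / 2"
  have h: "h > 0" "h < e" "h < r" using e r unfolding h_def by auto
  then have "g \<tau> < g (\<tau> - h)" using e by auto
  moreover have "g (\<tau> - h) \<le> g \<tau>" using mx h by auto
  ultimately show False by simp
qed

lemma line_deriv:
  fixes f :: "'a::real_normed_vector \<Rightarrow> real"
  assumes "(f has_derivative f') (at (x0 + s *\<^sub>R b))"
  shows "((\<lambda>s. f (x0 + s *\<^sub>R b)) has_real_derivative f' b) (at s)"
proof -
  have p: "((\<lambda>s. x0 + s *\<^sub>R b) has_derivative (\<lambda>u. u *\<^sub>R b)) (at s)"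
    by (auto intro!: derivative_eq_intros)
  have lin: "linear f'" using assms has_derivative_linear by blast
  have "((\<lambda>s. f (x0 + s *\<^sub>R b)) has_derivative (\<lambda>u. f' (u *\<^sub>R b))) (at s)"
    using has_derivative_compose[OF p assms] by simp
  moreover have "(\<lambda>u. f' (u *\<^sub>R b)) = (\<lambda>u. f' b * u)"
    using lin by (auto simp: linear_scale)
  ultimately show ?thesis by (simp add: has_field_derivative_def)
qed

lemma sq_line_deriv:
  fixes x0 b ys :: "'a::real_inner"
  shows "((\<lambda>s. (x0 + s *\<^sub>R b - ys) \<bullet> (x0 + s *\<^sub>R b - ys)) has_real_derivative
           2 * ((x0 + s *\<^sub>R b - ys) \<bullet> b)) (at s)"
proof -
  let ?A = "(x0 - ys) \<bullet> (x0 - ys)" and ?B = "(x0 - ys) \<bullet> b" and ?C = "b \<bullet> b"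
  have eq: "(\<lambda>s. (x0 + s *\<^sub>R b - ys) \<bullet> (x0 + s *\<^sub>R b - ys)) = (\<lambda>s. ?A + 2 * s * ?B + s^2 * ?C)"
    by (auto simp: algebra_simps inner_commute power2_eq_square)
  have "((\<lambda>s. ?A + 2 * s * ?B + s^2 * ?C) has_real_derivative (2 * ?B + 2 * s * ?C)) (at s)"
    by (auto intro!: derivative_eq_intros)
  moreover have "2 * ?B + 2 * s * ?C = 2 * ((x0 + s *\<^sub>R b - ys) \<bullet> b)"
    by (simp add: algebra_simps inner_commute)
  ultimately show ?thesis unfolding eq by simp
qed

lemma comb_deriv:
  fixes Y Qs :: "real \<Rightarrow> real"
  assumes "(Y has_real_derivative a) (at x within S)" "(Qs has_real_derivative q) (at x within S)"
  shows "((\<lambda>s. E * (\<sigma> * Y s + c) - \<epsilon> * (Qs s + K)) has_real_derivative (E*(\<sigma>*a) - \<epsilon>*q)) (at x within S)"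
  using assms by (auto intro!: derivative_eq_intros)

lemma time_deriv:
  fixes Y h :: "real \<Rightarrow> real"
  assumes "(Y has_real_derivative a) (at \<tau>)" "(h has_real_derivative hp) (at \<tau>)"
  shows "((\<lambda>t. exp (-lam*t) * (\<sigma> * Y t + h t) - C) has_real_derivative
     (exp (-lam*\<tau>) * (-lam) * (\<sigma> * Y \<tau> + h \<tau>) + exp (-lam*\<tau>) * (\<sigma> * a + hp))) (at \<tau>)"
  using assms by (auto intro!: derivative_eq_intros simp: algebra_simps)

lemma lin_line_deriv:
  fixes x0 b ys :: "'a::real_inner"
  shows "((\<lambda>s. (x0 + s *\<^sub>R b - ys) \<bullet> b) has_real_derivative b \<bullet> b) (at s)"
proof -
  have eq: "(\<lambda>s. (x0 + s *\<^sub>R b - ys) \<bullet> b) = (\<lambda>s. (x0 - ys) \<bullet> b + s * (b \<bullet> b))"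
    by (auto simp: algebra_simps inner_commute)
  show ?thesis unfolding eq by (auto intro!: derivative_eq_intros)
qed

lemma max_principle:
  fixes \<Omega> :: "'a::euclidean_space set" and \<phi> :: "'a \<Rightarrow> real" and y G :: "'a \<Rightarrow> real \<Rightarrow> real"
    and h h' :: "real \<Rightarrow> real" and d \<sigma> L t0 T :: real
  assumes dom: "bounded_C1_domain \<Omega> \<phi>" and d: "d \<ge> 0"
  and cont: "continuous_on (closure \<Omega> \<times> {t0..T}) (\<lambda>(x,t). y x t)"
  and hder: "\<forall>t. (h has_real_derivative h' t) (at t)"
  and reg: "\<forall>t\<in>{t0<..T}. \<forall>x\<in>\<Omega>. (\<lambda>z. y z t) differentiable (at x) \<and>
        (\<forall>b\<in>Basis. (\<lambda>z. frechet_derivative (\<lambda>z. y z t) (at z) b) differentiable (at x)) \<and>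
        ((\<lambda>s. y x s) has_real_derivative (d * laplacian (\<lambda>z. y z t) x + y x t * G x t)) (at t)"
  and bnd: "\<forall>t\<in>{t0<..T}. \<forall>x\<in>frontier \<Omega>. \<exists>D. ((\<lambda>z. y z t) has_derivative D) (at x within closure \<Omega>) \<and> D (grad \<phi> x) = 0"
  and init: "\<forall>x\<in>closure \<Omega>. \<sigma> * y x t0 + h t0 \<le> 0"
  and ineq: "\<forall>t\<in>{t0<..T}. \<forall>x\<in>\<Omega>. \<sigma> * y x t + h t > 0 \<longrightarrow> \<sigma> * (y x t * G x t) + h' t \<le> L * (\<sigma> * y x t + h t)"
  shows "\<forall>t\<in>{t0..T}. \<forall>x\<in>closure \<Omega>. \<sigma> * y x t + h t \<le> 0"
proof (rule ccontr)
  assume "\<not> ?thesis"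
  then obtain t1 x1 where t1: "t1 \<in> {t0..T}" and x1: "x1 \<in> closure \<Omega>" and w1: "\<sigma> * y x1 t1 + h t1 > 0"
    by auto
  have diff: "\<forall>x. \<phi> differentiable (at x)" and O: "\<Omega> = {x. \<phi> x < 0}" and op: "open \<Omega>" and bd: "bounded \<Omega>"
    using dom unfolding bounded_C1_domain_def C1_defining_function_def by auto
  have \<phi>c: "continuous_on UNIV \<phi>"
    using diff differentiable_imp_continuous_within continuous_at_imp_continuous_on by blast
  obtain \<delta> s1 where \<delta>: "\<delta> > 0" and s1: "s1 > 0" and Sne: "{x. \<phi> x \<le> -\<delta>} \<noteq> {}"
    and near: "\<forall>x0\<in>frontier \<Omega>. \<forall>y. \<phi> y \<le> -\<delta> \<and> dist x0 y = infdist x0 {x. \<phi> x \<le> -\<delta>} \<longrightarrow> (x0 - y) \<bullet> grad \<phi> x0 > 0"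
    and inw: "\<forall>x0\<in>frontier \<Omega>. \<forall>s. 0 < s \<and> s < s1 \<longrightarrow> x0 - s *\<^sub>R grad \<phi> x0 \<in> \<Omega>"
    using geom[OF dom] by blast
  define S where "S = {x. \<phi> x \<le> -\<delta>}"
  have Scl: "closed S" unfolding S_def using \<phi>c by (simp add: closed_Collect_le continuous_on_const)
  define \<psi> where "\<psi> x = (infdist x S)^2" for x
  have \<psi>c: "continuous_on UNIV \<psi>" unfolding \<psi>_def by (intro continuous_intros)
  have cpt: "compact (closure \<Omega>)" using bd by simp
  have \<psi>nn: "\<psi> x \<ge> 0" for x unfolding \<psi>_def by simp
  obtain P where P: "\<forall>x\<in>closure \<Omega>. \<psi> x \<le> P"
  proof -
    have "compact (\<psi> ` closure \<Omega>)"
      using \<psi>c cpt by (intro compact_continuous_image) (auto intro: continuous_on_subset)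
    then have "bounded (\<psi> ` closure \<Omega>)" by (rule compact_imp_bounded)
    then obtain B where "\<forall>x\<in>closure \<Omega>. norm (\<psi> x) \<le> B" by (auto simp: bounded_iff)
    then show ?thesis using that[of B] by force
  qed
  have P0: "P \<ge> 0" using P x1 \<psi>nn[of x1] by force
  define n where "n = real DIM('a)"
  define K where "K = 2 * d * n + 1"
  have K: "K \<ge> 1" using d unfolding K_def n_def by simp
  define lam where "lam = \<bar>L\<bar> + 1"
  define w where "w x t = \<sigma> * y x t + h t" for x t
  define \<epsilon> where "\<epsilon> = exp (-lam*t1) * w x1 t1 / (2*(P + K))"
  have PK: "P + K > 0" using P0 K by simp
  have \<epsilon>: "\<epsilon> > 0" using w1 PK unfolding \<epsilon>_def w_def by simp
  define z where "z x t = exp (-lam*t) * w x t - \<epsilon> * (\<psi> x + K)" for x t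
  have z1: "z x1 t1 > 0"
  proof -
    have "\<epsilon> * (\<psi> x1 + K) \<le> \<epsilon> * (P + K)" using P x1 \<epsilon> by (simp add: mult_left_mono)
    also have "\<epsilon> * (P + K) = exp (-lam*t1) * w x1 t1 / 2" using PK unfolding \<epsilon>_def by (simp add: field_simps)
    also have "\<dots> < exp (-lam*t1) * w x1 t1" using w1 unfolding w_def by simp
    finally show ?thesis unfolding z_def by simp
  qed
  let ?C = "closure \<Omega> \<times> {t0..T}"
  have Cc: "compact ?C" using cpt by (intro compact_Times) auto
  have Cne: "?C \<noteq> {}" using x1 t1 by auto
  have hc: "continuous_on UNIV h"
    using hder by (meson DERIV_continuous continuous_at_imp_continuous_on)
  have yc: "continuous_on ?C (\<lambda>p. y (fst p) (snd p))" using cont by (simp add: case_prod_beta')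
  have zc: "continuous_on ?C (\<lambda>p. z (fst p) (snd p))"
    unfolding z_def w_def
    by (intro continuous_intros yc continuous_on_compose2[OF hc] continuous_on_compose2[OF \<psi>c]) auto
  obtain p0 where p0: "p0 \<in> ?C" "\<forall>p\<in>?C. z (fst p) (snd p) \<le> z (fst p0) (snd p0)"
    using continuous_attains_sup[OF Cc Cne zc] by blast
  obtain x0 \<tau> where p0e: "p0 = (x0, \<tau>)" by (cases p0)
  have x0: "x0 \<in> closure \<Omega>" and \<tau>I: "\<tau> \<in> {t0..T}" using p0 p0e by auto
  have zmax: "\<forall>x\<in>closure \<Omega>. \<forall>t\<in>{t0..T}. z x t \<le> z x0 \<tau>" using p0 p0e by force
  have zpos: "z x0 \<tau> > 0" using z1 zmax x1 t1 by force
  have "\<tau> \<noteq> t0"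
  proof
    assume "\<tau> = t0"
    then have "w x0 \<tau> \<le> 0" using init x0 unfolding w_def by auto
    then have "exp (-lam*\<tau>) * w x0 \<tau> \<le> 0" by (simp add: mult_nonpos_nonneg mult_le_0_iff)
    moreover have "\<epsilon> * (\<psi> x0 + K) > 0" using \<epsilon> \<psi>nn[of x0] K by simp
    ultimately show False using zpos unfolding z_def by simp
  qed
  then have \<tau>: "\<tau> \<in> {t0<..T}" using \<tau>I by auto
  define E where "E = exp (-lam*\<tau>)"
  have E: "E > 0" unfolding E_def by simp
  have EwK: "E * w x0 \<tau> > \<epsilon> * K"
  proof -
    have "\<epsilon> * K \<le> \<epsilon> * (\<psi> x0 + K)" using \<epsilon> \<psi>nn[of x0] by simp
    then show ?thesis using zpos unfolding z_def E_def by simp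
  qed
  have wpos: "w x0 \<tau> > 0"
  proof -
    have "E * w x0 \<tau> > 0" using EwK \<epsilon> K by (smt (verit) mult_pos_pos)
    then show ?thesis using E by (simp add: zero_less_mult_iff)
  qed
  obtain ys where ys: "ys \<in> S" "infdist x0 S = dist x0 ys"
    using infdist_attains_inf[OF Scl] Sne unfolding S_def by metis
  define Q where "Q x = (x - ys) \<bullet> (x - ys)" for x
  have \<psi>Q: "\<psi> x \<le> Q x" for x
  proof -
    have "infdist x S \<le> dist x ys" using ys(1) by (rule infdist_le)
    then have "(infdist x S)^2 \<le> (dist x ys)^2" by (simp add: power_mono infdist_nonneg)
    then show ?thesis unfolding \<psi>_def Q_def by (simp add: dist_norm power2_norm_eq_inner)
  qed
  have \<psi>Q0: "\<psi> x0 = Q x0" unfolding \<psi>_def Q_def using ys(2) by (simp add: dist_norm power2_norm_eq_inner)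
  define \<zeta> where "\<zeta> x = E * w x \<tau> - \<epsilon> * (Q x + K)" for x
  have \<zeta>max: "\<forall>x\<in>closure \<Omega>. \<zeta> x \<le> \<zeta> x0"
  proof
    fix x assume x: "x \<in> closure \<Omega>"
    have "\<zeta> x \<le> z x \<tau>" unfolding \<zeta>_def z_def E_def using \<psi>Q[of x] \<epsilon> by (simp add: mult_left_mono)
    also have "\<dots> \<le> z x0 \<tau>" using zmax x \<tau>I by auto
    also have "\<dots> = \<zeta> x0" unfolding \<zeta>_def z_def E_def using \<psi>Q0 by simp
    finally show "\<zeta> x \<le> \<zeta> x0" .
  qed
  show False
  proof (cases "x0 \<in> \<Omega>")
    case x0\<Omega>: True
    have r1: "\<forall>b\<in>Basis. (\<lambda>z. frechet_derivative (\<lambda>z. y z \<tau>) (at z) b) differentiable (at x0)"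
      and Yd: "((\<lambda>s. y x0 s) has_real_derivative (d * laplacian (\<lambda>z. y z \<tau>) x0 + y x0 \<tau> * G x0 \<tau>)) (at \<tau>)"
      using reg \<tau> x0\<Omega> by auto
    define \<Delta> where "\<Delta> = laplacian (\<lambda>z. y z \<tau>) x0"
    have gd: "((\<lambda>t. z x0 t) has_real_derivative
       (E * (-lam) * w x0 \<tau> + E * (\<sigma> * (d * \<Delta> + y x0 \<tau> * G x0 \<tau>) + h' \<tau>))) (at \<tau>)"
      unfolding z_def w_def E_def \<Delta>_def
      by (rule time_deriv[OF Yd hder[rule_format]])
    have "0 \<le> E * (-lam) * w x0 \<tau> + E * (\<sigma> * (d * \<Delta> + y x0 \<tau> * G x0 \<tau>) + h' \<tau>)"
    proof (rule left_deriv_max[OF _ _ gd])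
      show "\<tau> - t0 > 0" using \<tau> by simp
      show "\<forall>t. \<tau> - (\<tau> - t0) < t \<and> t < \<tau> \<longrightarrow> z x0 t \<le> z x0 \<tau>" using zmax x0 \<tau> by auto
    qed
    then have "0 \<le> E * (\<sigma> * (d * \<Delta> + y x0 \<tau> * G x0 \<tau>) + h' \<tau> - lam * w x0 \<tau>)"
      by (simp add: algebra_simps)
    then have tt: "lam * w x0 \<tau> \<le> \<sigma> * (d * \<Delta> + y x0 \<tau> * G x0 \<tau>) + h' \<tau>"
      using E by (simp add: zero_le_mult_iff)
    have ie: "\<sigma> * (y x0 \<tau> * G x0 \<tau>) + h' \<tau> \<le> L * w x0 \<tau>"
      using ineq \<tau> x0\<Omega> wpos unfolding w_def by auto
    have wle: "w x0 \<tau> \<le> d * (\<sigma> * \<Delta>)"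
    proof -
      have a: "lam * w x0 \<tau> \<le> d * (\<sigma> * \<Delta>) + L * w x0 \<tau>" using tt ie by (simp add: algebra_simps)
      have "1 * w x0 \<tau> \<le> (lam - L) * w x0 \<tau>"
        using wpos unfolding lam_def by (intro mult_right_mono) auto
      then have "w x0 \<tau> \<le> lam * w x0 \<tau> - L * w x0 \<tau>" by (simp add: algebra_simps)
      then show ?thesis using a by linarith
    qed
    obtain r where r: "r > 0" "ball x0 r \<subseteq> \<Omega>" using op x0\<Omega> open_contains_ball by blast
    have sb: "E * \<sigma> * frechet_derivative (\<lambda>z. frechet_derivative (\<lambda>z. y z \<tau>) (at z) b) (at x0) b \<le> 2 * \<epsilon>"
      if b: "b \<in> Basis" for b
    proof -
      have nb: "b \<bullet> b = 1" using b by simp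
      have inball: "x0 + s *\<^sub>R b \<in> \<Omega>" if "\<bar>s\<bar> < r" for s
      proof -
        have "dist x0 (x0 + s *\<^sub>R b) = \<bar>s\<bar>" using b by (simp add: dist_norm)
        then show ?thesis using r that by auto
      qed
      define Fb where "Fb s = E * \<sigma> * frechet_derivative (\<lambda>z. y z \<tau>) (at (x0 + s *\<^sub>R b)) b
          - \<epsilon> * (2 * ((x0 + s *\<^sub>R b - ys) \<bullet> b))" for s
      define c where "c = E * \<sigma> * frechet_derivative (\<lambda>z. frechet_derivative (\<lambda>z. y z \<tau>) (at z) b) (at x0) b - \<epsilon> * 2"
      have df: "\<forall>s. \<bar>s\<bar> < r \<longrightarrow> ((\<lambda>s. \<zeta> (x0 + s *\<^sub>R b)) has_real_derivative Fb s) (at s)"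
      proof (intro allI impI)
        fix s assume s: "\<bar>s\<bar> < r"
        have dif: "(\<lambda>z. y z \<tau>) differentiable (at (x0 + s *\<^sub>R b))" using reg \<tau> inball[OF s] by auto
        have l1: "((\<lambda>s. y (x0 + s *\<^sub>R b) \<tau>) has_real_derivative frechet_derivative (\<lambda>z. y z \<tau>) (at (x0 + s *\<^sub>R b)) b) (at s)"
          using line_deriv[of "\<lambda>z. y z \<tau>"] dif frechet_derivative_works by blast
        have "((\<lambda>s. E * (\<sigma> * y (x0 + s *\<^sub>R b) \<tau> + h \<tau>) - \<epsilon> * ((x0 + s *\<^sub>R b - ys) \<bullet> (x0 + s *\<^sub>R b - ys) + K))
          has_real_derivative (E * (\<sigma> * frechet_derivative (\<lambda>z. y z \<tau>) (at (x0 + s *\<^sub>R b)) b)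
             - \<epsilon> * (2 * ((x0 + s *\<^sub>R b - ys) \<bullet> b)))) (at s)"
          by (rule comb_deriv[OF l1 sq_line_deriv])
        then show "((\<lambda>s. \<zeta> (x0 + s *\<^sub>R b)) has_real_derivative Fb s) (at s)"
          unfolding \<zeta>_def w_def Q_def Fb_def by (simp add: mult.assoc)
      qed
      have dF: "(Fb has_real_derivative c) (at 0)"
      proof -
        have dif: "(\<lambda>z. frechet_derivative (\<lambda>z. y z \<tau>) (at z) b) differentiable (at (x0 + 0 *\<^sub>R b))"
          using r1 b by simp
        have l1: "((\<lambda>s. frechet_derivative (\<lambda>z. y z \<tau>) (at (x0 + s *\<^sub>R b)) b) has_real_derivative
            frechet_derivative (\<lambda>z. frechet_derivative (\<lambda>z. y z \<tau>) (at z) b) (at x0) b) (at 0)"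
          using line_deriv[OF dif[unfolded frechet_derivative_works]] by simp
        have "((\<lambda>s. E * (\<sigma> * frechet_derivative (\<lambda>z. y z \<tau>) (at (x0 + s *\<^sub>R b)) b + 0) - \<epsilon> * (2 * ((x0 + s *\<^sub>R b - ys) \<bullet> b) + 0))
          has_real_derivative (E * (\<sigma> * frechet_derivative (\<lambda>z. frechet_derivative (\<lambda>z. y z \<tau>) (at z) b) (at x0) b)
             - \<epsilon> * (2 * (b \<bullet> b)))) (at 0)"
          by (rule comb_deriv[OF l1 DERIV_cmult[OF lin_line_deriv]])
        then show ?thesis unfolding Fb_def c_def using nb by (simp add: mult.assoc)
      qed
      have mx: "\<forall>s. \<bar>s\<bar> < r \<longrightarrow> (\<lambda>s. \<zeta> (x0 + s *\<^sub>R b)) s \<le> (\<lambda>s. \<zeta> (x0 + s *\<^sub>R b)) 0"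
        using \<zeta>max inball closure_subset by auto
      have "c \<le> 0" by (rule second_deriv_max[OF r(1) mx df dF])
      then show ?thesis unfolding c_def by simp
    qed
    have "E * (\<sigma> * \<Delta>) = (\<Sum>b\<in>Basis. E * \<sigma> * frechet_derivative (\<lambda>z. frechet_derivative (\<lambda>z. y z \<tau>) (at z) b) (at x0) b)"
      unfolding \<Delta>_def laplacian_def by (simp add: sum_distrib_left mult.assoc)
    also have "\<dots> \<le> of_nat (card (Basis::'a set)) * (2 * \<epsilon>)"
      by (rule sum_bounded_above) (use sb in auto)
    finally have ED: "E * (\<sigma> * \<Delta>) \<le> 2 * \<epsilon> * n" unfolding n_def by (simp add: mult.commute)
    have "E * w x0 \<tau> \<le> E * (d * (\<sigma> * \<Delta>))" using wle E by (simp add: mult_left_mono)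
    also have "\<dots> = d * (E * (\<sigma> * \<Delta>))" by simp
    also have "\<dots> \<le> d * (2 * \<epsilon> * n)" using ED d by (simp add: mult_left_mono)
    finally have "E * w x0 \<tau> \<le> d * (2 * \<epsilon> * n)" .
    moreover have "\<epsilon> * K = d * (2 * \<epsilon> * n) + \<epsilon>" unfolding K_def by (simp add: algebra_simps)
    ultimately show False using EwK \<epsilon> by linarith

  next
    case False
    then have x0F: "x0 \<in> frontier \<Omega>" using x0 op by (simp add: frontier_def interior_open)
    obtain D where D: "((\<lambda>z. y z \<tau>) has_derivative D) (at x0 within closure \<Omega>)" "D (grad \<phi> x0) = 0"
      using bnd \<tau> x0F by blast
    define g0 where "g0 = grad \<phi> x0"
    have pin: "x0 + s *\<^sub>R (- g0) \<in> closure \<Omega>" if "0 \<le> s" "s < s1" for s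
    proof (cases "s = 0")
      case True then show ?thesis using x0 by simp
    next
      case False
      then have "x0 - s *\<^sub>R g0 \<in> \<Omega>" using inw x0F that unfolding g0_def by auto
      then show ?thesis using closure_subset by auto
    qed
    have lin: "linear D" using D(1) has_derivative_linear by blast
    have pd: "((\<lambda>s. x0 + s *\<^sub>R (- g0)) has_derivative (\<lambda>u. u *\<^sub>R (- g0))) (at 0 within {0..<s1})"
      by (auto intro!: derivative_eq_intros)
    have yd: "((\<lambda>z. y z \<tau>) has_derivative D) (at ((\<lambda>s. x0 + s *\<^sub>R (- g0)) 0) within (\<lambda>s. x0 + s *\<^sub>R (- g0)) ` {0..<s1})"
    proof -
      have "(\<lambda>s. x0 + s *\<^sub>R (- g0)) ` {0..<s1} \<subseteq> closure \<Omega>" using pin by auto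
      then show ?thesis using has_derivative_subset[OF D(1)] by simp
    qed
    have c1: "(((\<lambda>z. y z \<tau>) \<circ> (\<lambda>s. x0 + s *\<^sub>R (- g0))) has_derivative (D \<circ> (\<lambda>u. u *\<^sub>R (- g0)))) (at 0 within {0..<s1})"
      by (rule diff_chain_within[OF pd yd])
    have c2: "(D \<circ> (\<lambda>u. u *\<^sub>R (- g0))) = (\<lambda>u. 0 * u)"
      using lin D(2) unfolding g0_def by (auto simp: linear_scale linear_neg)
    have y0: "((\<lambda>s. y (x0 + s *\<^sub>R (- g0)) \<tau>) has_real_derivative 0) (at 0 within {0..<s1})"
    proof -
      have e0: "(*) (0::real) = (\<lambda>u. 0)" by auto
      from c1 c2 show ?thesis by (simp add: has_field_derivative_def comp_def e0)
    qed
    have q0: "((\<lambda>s. (x0 + s *\<^sub>R (- g0) - ys) \<bullet> (x0 + s *\<^sub>R (- g0) - ys)) has_real_derivative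
        2 * ((x0 + 0 *\<^sub>R (- g0) - ys) \<bullet> (- g0))) (at 0 within {0..<s1})"
      using sq_line_deriv[of x0 "- g0" ys 0] by (rule has_field_derivative_at_within)
    have kd: "((\<lambda>s. \<zeta> (x0 + s *\<^sub>R (- g0))) has_real_derivative
        (E * (\<sigma> * 0) - \<epsilon> * (2 * ((x0 + 0 *\<^sub>R (- g0) - ys) \<bullet> (- g0))))) (at 0 within {0..<s1})"
      unfolding \<zeta>_def w_def Q_def by (rule comb_deriv[OF y0 q0])
    have pos: "(x0 - ys) \<bullet> g0 > 0" using near x0F ys unfolding S_def g0_def by auto
    have mx: "\<forall>s. 0 \<le> s \<and> s < s1 \<longrightarrow> (\<lambda>s. \<zeta> (x0 + s *\<^sub>R (- g0))) s \<le> (\<lambda>s. \<zeta> (x0 + s *\<^sub>R (- g0))) 0"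
      using \<zeta>max pin x0 by auto
    have "E * (\<sigma> * 0) - \<epsilon> * (2 * ((x0 + 0 *\<^sub>R (- g0) - ys) \<bullet> (- g0))) \<le> 0"
      by (rule right_deriv_max[OF s1 mx kd])
    then have "\<epsilon> * (2 * ((x0 - ys) \<bullet> g0)) \<le> 0" by simp
    moreover have "\<epsilon> * (2 * ((x0 - ys) \<bullet> g0)) > 0" using pos \<epsilon> by simp
    ultimately show False by simp

  qed
qed

definition scal :: "'a::euclidean_space set \<Rightarrow> ('a \<Rightarrow> real) \<Rightarrow> real \<Rightarrow> ('a \<Rightarrow> real \<Rightarrow> real) \<Rightarrow> ('a \<Rightarrow> real \<Rightarrow> real) \<Rightarrow> bool" where
  "scal \<Omega> \<phi> d y G \<longleftrightarrow> continuous_on (closure \<Omega> \<times> {0..}) (\<lambda>(x,t). y x t) \<and>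
     (\<forall>t>0. \<forall>x\<in>\<Omega>. (\<lambda>z. y z t) differentiable (at x) \<and>
        (\<forall>b\<in>Basis. (\<lambda>z. frechet_derivative (\<lambda>z. y z t) (at z) b) differentiable (at x)) \<and>
        ((\<lambda>s. y x s) has_real_derivative (d * laplacian (\<lambda>z. y z t) x + y x t * G x t)) (at t)) \<and>
     (\<forall>t>0. \<forall>x\<in>frontier \<Omega>. \<exists>D. ((\<lambda>z. y z t) has_derivative D) (at x within closure \<Omega>) \<and> D (grad \<phi> x) = 0)"

lemma cmp:
  fixes \<Omega> :: "'a::euclidean_space set"
  assumes dom: "bounded_C1_domain \<Omega> \<phi>" and d: "d \<ge> 0" and sc: "scal \<Omega> \<phi> d y G"
    and t0: "t0 \<ge> 0"
    and hder: "\<forall>t. (h has_real_derivative h' t) (at t)"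
    and init: "\<forall>x\<in>closure \<Omega>. \<sigma> * y x t0 + h t0 \<le> 0"
    and ineq: "\<forall>t\<in>{t0<..T}. \<forall>x\<in>\<Omega>. \<sigma> * y x t + h t > 0 \<longrightarrow> \<sigma> * (y x t * G x t) + h' t \<le> L * (\<sigma> * y x t + h t)"
  shows "\<forall>t\<in>{t0..T}. \<forall>x\<in>closure \<Omega>. \<sigma> * y x t + h t \<le> 0"
proof (rule max_principle[OF dom d _ hder _ _ init ineq])
  show "continuous_on (closure \<Omega> \<times> {t0..T}) (\<lambda>(x, t). y x t)"
    using sc t0 unfolding scal_def by (auto intro: continuous_on_subset)
  show "\<forall>t\<in>{t0<..T}. \<forall>x\<in>\<Omega>. (\<lambda>z. y z t) differentiable (at x) \<and>
        (\<forall>b\<in>Basis. (\<lambda>z. frechet_derivative (\<lambda>z. y z t) (at z) b) differentiable (at x)) \<and>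
        ((\<lambda>s. y x s) has_real_derivative (d * laplacian (\<lambda>z. y z t) x + y x t * G x t)) (at t)"
    using sc t0 unfolding scal_def by auto
  show "\<forall>t\<in>{t0<..T}. \<forall>x\<in>frontier \<Omega>. \<exists>D. ((\<lambda>z. y z t) has_derivative D) (at x within closure \<Omega>) \<and> D (grad \<phi> x) = 0"
    using sc t0 unfolding scal_def by auto
qed

lemma scal_bound:
  fixes \<Omega> :: "'a::euclidean_space set" and y :: "'a \<Rightarrow> real \<Rightarrow> real" and T :: real
  assumes dom: "bounded_C1_domain \<Omega> \<phi>" and cont: "continuous_on (closure \<Omega> \<times> {0..}) (\<lambda>(x,t). y x t)"
  shows "\<exists>M. \<forall>x\<in>closure \<Omega>. \<forall>t\<in>{0..T}. \<bar>y x t\<bar> \<le> M"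
proof -
  have bd: "bounded \<Omega>" using dom unfolding bounded_C1_domain_def by auto
  have cpt: "compact (closure \<Omega> \<times> {0..T})" using bd by (intro compact_Times) auto
  have "continuous_on (closure \<Omega> \<times> {0..T}) (\<lambda>(x,t). y x t)"
    using cont by (rule continuous_on_subset) auto
  then have "compact ((\<lambda>(x,t). y x t) ` (closure \<Omega> \<times> {0..T}))"
    using cpt by (rule compact_continuous_image)
  then have "bounded ((\<lambda>(x,t). y x t) ` (closure \<Omega> \<times> {0..T}))" by (rule compact_imp_bounded)
  then obtain M where "\<forall>p\<in>closure \<Omega> \<times> {0..T}. norm ((\<lambda>(x,t). y x t) p) \<le> M"
    by (auto simp: bounded_iff)
  then show ?thesis by force
qed

lemma exp_small:
  fixes \<alpha> \<eta> M0 t0 :: real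
  assumes "\<alpha> > 0" "\<eta> > 0" "M0 \<ge> 0"
  shows "\<exists>T\<ge>t0. \<forall>t\<ge>T. M0 * exp (-\<alpha> * (t - t0)) < \<eta>"
proof -
  define T where "T = t0 + M0 / (\<alpha> * \<eta>)"
  have "T \<ge> t0" using assms unfolding T_def by simp
  moreover have "M0 * exp (-\<alpha> * (t - t0)) < \<eta>" if t: "t \<ge> T" for t
  proof -
    define s where "s = \<alpha> * (t - t0)"
    have s0: "s \<ge> 0" using t assms \<open>T \<ge> t0\<close> unfolding s_def by simp
    have "1 + s \<le> exp s" by (rule exp_ge_add_one_self)
    then have e: "exp (-s) \<le> 1 / (1 + s)" using s0 by (simp add: exp_minus field_simps)
    have "M0 * exp (-s) \<le> M0 / (1 + s)" using e assms by (simp add: mult_left_mono divide_inverse)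
    also have "M0 / (1 + s) < \<eta>"
    proof -
      have "s \<ge> M0 / \<eta>" using t assms unfolding s_def T_def by (simp add: field_simps)
      then have "M0 < \<eta> * (1 + s)" using assms by (simp add: field_simps)
      then show ?thesis using s0 by (simp add: field_simps)
    qed
    finally show ?thesis unfolding s_def by simp
  qed
  ultimately show ?thesis by blast
qed

lemma pos_lemma:
  fixes \<Omega> :: "'a::euclidean_space set" and y G :: "'a \<Rightarrow> real \<Rightarrow> real" and c d t0 m \<alpha> \<beta> :: real
  assumes dom: "bounded_C1_domain \<Omega> \<phi>" and d: "d \<ge> 0" and sc: "scal \<Omega> \<phi> d y G"
    and c: "c > 0" and init: "\<forall>x\<in>closure \<Omega>. y x 0 \<ge> c"
    and Gb: "\<forall>T. \<exists>L. \<forall>t\<in>{0<..T}. \<forall>x\<in>\<Omega>. \<bar>G x t\<bar> \<le> L"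
  shows "\<forall>t\<ge>0. \<forall>x\<in>closure \<Omega>. y x t > 0"
proof (intro allI impI ballI)
  fix t1 :: real and x1 assume t1: "t1 \<ge> 0" and x1: "x1 \<in> closure \<Omega>"
  obtain L0 where L0: "\<forall>t\<in>{0<..t1}. \<forall>x\<in>\<Omega>. \<bar>G x t\<bar> \<le> L0" using Gb by blast
  define L where "L = \<bar>L0\<bar>"
  have L: "\<forall>t\<in>{0<..t1}. \<forall>x\<in>\<Omega>. \<bar>G x t\<bar> \<le> L" "L \<ge> 0" using L0 unfolding L_def by force+
  define h where "h t = c * exp (-L*t)" for t
  define h' where "h' t = c * exp (-L*t) * (-L)" for t
  have hder: "\<forall>t. (h has_real_derivative h' t) (at t)"
    unfolding h_def h'_def by (auto intro!: derivative_eq_intros)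
  have "\<forall>t\<in>{0..t1}. \<forall>x\<in>closure \<Omega>. (-1) * y x t + h t \<le> 0"
  proof (rule cmp[OF dom d sc order_refl hder])
    show "\<forall>x\<in>closure \<Omega>. (-1) * y x 0 + h 0 \<le> 0" using init unfolding h_def by auto
    show "\<forall>t\<in>{0<..t1}. \<forall>x\<in>\<Omega>. (-1) * y x t + h t > 0 \<longrightarrow>
        (-1) * (y x t * G x t) + h' t \<le> L * ((-1) * y x t + h t)"
    proof (intro ballI impI)
      fix t x assume t: "t \<in> {0<..t1}" and x: "x \<in> \<Omega>" and w: "(-1) * y x t + h t > 0"
      have hp: "h t \<ge> 0" using c unfolding h_def by simp
      have G: "\<bar>G x t\<bar> \<le> L" using L t x by blast
      have e1: "(-1) * (y x t * G x t) + h' t = (h t - y x t) * G x t - h t * (G x t + L)"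
        unfolding h_def h'_def by (simp add: algebra_simps)
      have e2: "(h t - y x t) * G x t \<le> (h t - y x t) * L"
        using w G by (intro mult_left_mono) auto
      have e3: "h t * (G x t + L) \<ge> 0" using hp G by simp
      show "(-1) * (y x t * G x t) + h' t \<le> L * ((-1) * y x t + h t)"
        using e1 e2 e3 by (simp add: algebra_simps)
    qed
  qed
  then have "y x1 t1 \<ge> h t1" using t1 x1 by auto
  moreover have "h t1 > 0" using c unfolding h_def by simp
  ultimately show "y x1 t1 > 0" by simp
qed

lemma upper_lemma:
  fixes \<Omega> :: "'a::euclidean_space set" and y G :: "'a \<Rightarrow> real \<Rightarrow> real" and c d t0 m \<alpha> \<beta> :: real
  assumes dom: "bounded_C1_domain \<Omega> \<phi>" and d: "d \<ge> 0" and sc: "scal \<Omega> \<phi> d y G"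
    and t0: "t0 \<ge> 0" and nn: "\<forall>t\<ge>t0. \<forall>x\<in>closure \<Omega>. y x t \<ge> 0"
    and Gle: "\<forall>t>t0. \<forall>x\<in>\<Omega>. G x t \<le> \<alpha> - \<beta> * y x t" and \<alpha>: "\<alpha> > 0" and \<beta>: "\<beta> > 0"
  shows "\<forall>\<eta>>0. \<exists>T. \<forall>t\<ge>T. \<forall>x\<in>closure \<Omega>. y x t \<le> \<alpha>/\<beta> + \<eta>"
proof -
  obtain M where M: "\<forall>x\<in>closure \<Omega>. \<forall>t\<in>{0..t0}. \<bar>y x t\<bar> \<le> M"
    using scal_bound[OF dom, of y t0] sc unfolding scal_def by blast
  define M0 where "M0 = max M 0"
  have M0: "M0 \<ge> 0" "\<forall>x\<in>closure \<Omega>. y x t0 \<le> M0"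
  proof -
    show "M0 \<ge> 0" unfolding M0_def by simp
    show "\<forall>x\<in>closure \<Omega>. y x t0 \<le> M0"
    proof
      fix x assume x: "x \<in> closure \<Omega>"
      have "t0 \<in> {0..t0}" using t0 by simp
      then have "\<bar>y x t0\<bar> \<le> M" using M x by blast
      then show "y x t0 \<le> M0" unfolding M0_def by linarith
    qed
  qed
  define h where "h t = -(\<alpha>/\<beta> + M0 * exp (-\<alpha>*(t - t0)))" for t
  define h' where "h' t = \<alpha> * M0 * exp (-\<alpha>*(t - t0))" for t
  have hder: "\<forall>t. (h has_real_derivative h' t) (at t)"
    unfolding h_def h'_def by (auto intro!: derivative_eq_intros simp: algebra_simps)
  have main: "\<forall>t\<in>{t0..T}. \<forall>x\<in>closure \<Omega>. 1 * y x t + h t \<le> 0" for T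
  proof (rule cmp[OF dom d sc t0 hder])
    show "\<forall>x\<in>closure \<Omega>. 1 * y x t0 + h t0 \<le> 0"
    proof
      fix x assume "x \<in> closure \<Omega>"
      then have "y x t0 \<le> M0" using M0 by auto
      moreover have "\<alpha>/\<beta> > 0" using \<alpha> \<beta> by simp
      ultimately show "1 * y x t0 + h t0 \<le> 0" unfolding h_def by simp
    qed
    show "\<forall>t\<in>{t0<..T}. \<forall>x\<in>\<Omega>. 1 * y x t + h t > 0 \<longrightarrow>
        1 * (y x t * G x t) + h' t \<le> \<alpha> * (1 * y x t + h t)"
    proof (intro ballI impI)
      fix t x assume t: "t \<in> {t0<..T}" and x: "x \<in> \<Omega>" and w: "1 * y x t + h t > 0"
      define e where "e = exp (-\<alpha>*(t - t0))"
      define U where "U = \<alpha>/\<beta> + M0 * e"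
      have e: "e > 0" unfolding e_def by simp
      have U0: "U \<ge> 0" using e M0 \<alpha> \<beta> unfolding U_def by simp
      have yU: "y x t > U" using w unfolding h_def U_def e_def by simp
      have y0: "y x t \<ge> 0"
      proof -
        have "t \<ge> t0" using t by simp
        moreover have "x \<in> closure \<Omega>" using x closure_subset by blast
        ultimately show ?thesis using nn by blast
      qed
      have G: "G x t \<le> \<alpha> - \<beta> * y x t" using Gle t x by auto
      have a1: "y x t * G x t \<le> y x t * (\<alpha> - \<beta> * y x t)" using G y0 by (rule mult_left_mono)
      have a2: "U * U \<le> y x t * y x t" using yU U0 by (intro mult_mono) auto
      have a3: "\<beta> * (U * U) \<le> \<beta> * (y x t * y x t)" using a2 \<beta> by simp
      have a4: "\<beta> * (U * U) = \<alpha> * \<alpha> / \<beta> + 2 * (\<alpha> * (M0 * e)) + \<beta> * ((M0 * e) * (M0 * e))"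
        unfolding U_def using \<beta> by (simp add: field_simps)
      have a5: "\<beta> * ((M0 * e) * (M0 * e)) \<ge> 0" using \<beta> by simp
      have a6: "\<alpha> * U = \<alpha> * \<alpha> / \<beta> + \<alpha> * (M0 * e)" unfolding U_def by (simp add: algebra_simps)
      have a7: "y x t * (\<alpha> - \<beta> * y x t) = \<alpha> * y x t - \<beta> * (y x t * y x t)" by (simp add: algebra_simps)
      have hh: "h t = - U" "h' t = \<alpha> * (M0 * e)" unfolding h_def h'_def U_def e_def by simp_all
      have a8: "\<alpha> * (1 * y x t + - U) = \<alpha> * y x t - \<alpha> * U" by (simp add: algebra_simps)
      show "1 * (y x t * G x t) + h' t \<le> \<alpha> * (1 * y x t + h t)"
        unfolding hh using a1 a3 a4 a5 a6 a7 a8 by linarith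
    qed
  qed
  show ?thesis
  proof (intro allI impI)
    fix \<eta> :: real assume \<eta>: "\<eta> > 0"
    obtain T where T: "T \<ge> t0" "\<forall>t\<ge>T. M0 * exp (-\<alpha> * (t - t0)) < \<eta>"
      using exp_small[OF \<alpha> \<eta> M0(1)] by blast
    have "\<forall>t\<ge>T. \<forall>x\<in>closure \<Omega>. y x t \<le> \<alpha>/\<beta> + \<eta>"
    proof (intro allI impI ballI)
      fix t x assume t: "t \<ge> T" and x: "x \<in> closure \<Omega>"
      have "t \<in> {t0..t}" using T t by simp
      then have "1 * y x t + h t \<le> 0" using main[of t] x by blast
      then have "y x t + h t \<le> 0" by simp
      moreover have "M0 * exp (-\<alpha> * (t - t0)) < \<eta>" using T(2) t by blast
      ultimately show "y x t \<le> \<alpha>/\<beta> + \<eta>" unfolding h_def by simp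
    qed
    then show "\<exists>T. \<forall>t\<ge>T. \<forall>x\<in>closure \<Omega>. y x t \<le> \<alpha>/\<beta> + \<eta>" by blast
  qed
qed

lemma lower_lemma:
  fixes \<Omega> :: "'a::euclidean_space set" and y G :: "'a \<Rightarrow> real \<Rightarrow> real" and c d t0 m \<alpha> \<beta> :: real
  assumes dom: "bounded_C1_domain \<Omega> \<phi>" and d: "d \<ge> 0" and sc: "scal \<Omega> \<phi> d y G"
    and t0: "t0 \<ge> 0" and m: "m > 0" and init: "\<forall>x\<in>closure \<Omega>. y x t0 \<ge> m"
    and nn: "\<forall>t\<ge>t0. \<forall>x\<in>closure \<Omega>. y x t \<ge> 0"
    and Gge: "\<forall>t>t0. \<forall>x\<in>\<Omega>. G x t \<ge> \<alpha> - \<beta> * y x t" and \<alpha>: "\<alpha> > 0" and \<beta>: "\<beta> > 0"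
  shows "\<forall>\<eta>>0. \<exists>T. \<forall>t\<ge>T. \<forall>x\<in>closure \<Omega>. y x t \<ge> \<alpha>/\<beta> - \<eta>"
proof -
  define m' where "m' = min m (\<alpha>/(2*\<beta>))"
  have m': "m' > 0" "m' \<le> m" "m' \<le> \<alpha>/(2*\<beta>)" using m \<alpha> \<beta> unfolding m'_def by auto
  define B where "B = \<alpha>/\<beta> - m'"
  have B: "B > 0"
  proof -
    have "\<alpha>/(2*\<beta>) < \<alpha>/\<beta>" using \<alpha> \<beta> by (simp add: field_simps)
    then show ?thesis using m' unfolding B_def by simp
  qed
  define \<gamma> where "\<gamma> = \<beta> * m'"
  have \<gamma>: "\<gamma> > 0" using \<beta> m' unfolding \<gamma>_def by simp
  define h where "h t = \<alpha>/\<beta> - B * exp (-\<gamma>*(t - t0))" for t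
  define h' where "h' t = \<gamma> * B * exp (-\<gamma>*(t - t0))" for t
  have hder: "\<forall>t. (h has_real_derivative h' t) (at t)"
    unfolding h_def h'_def by (auto intro!: derivative_eq_intros simp: algebra_simps)
  have main: "\<forall>t\<in>{t0..T}. \<forall>x\<in>closure \<Omega>. (-1) * y x t + h t \<le> 0" for T
  proof (rule cmp[OF dom d sc t0 hder])
    show "\<forall>x\<in>closure \<Omega>. (-1) * y x t0 + h t0 \<le> 0"
      using init m' unfolding h_def B_def by force
    show "\<forall>t\<in>{t0<..T}. \<forall>x\<in>\<Omega>. (-1) * y x t + h t > 0 \<longrightarrow>
        (-1) * (y x t * G x t) + h' t \<le> \<alpha> * ((-1) * y x t + h t)"
    proof (intro ballI impI)
      fix t x assume t: "t \<in> {t0<..T}" and x: "x \<in> \<Omega>" and w: "(-1) * y x t + h t > 0"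
      define e where "e = exp (-\<gamma>*(t - t0))"
      define lv where "lv = \<alpha>/\<beta> - B * e"
      have e: "e > 0" "e \<le> 1" using t \<gamma> unfolding e_def by auto
      have "B * e \<le> B" using B e by (intro mult_left_le) auto
      then have lvm: "lv \<ge> m'" unfolding lv_def B_def by simp
      have ylv: "y x t < lv" using w unfolding h_def lv_def e_def by simp
      have y0: "y x t \<ge> 0"
      proof -
        have "t \<ge> t0" using t by simp
        moreover have "x \<in> closure \<Omega>" using x closure_subset by blast
        ultimately show ?thesis using nn by blast
      qed
      have G: "G x t \<ge> \<alpha> - \<beta> * y x t" using Gge t x by auto
      have a1: "y x t * (\<alpha> - \<beta> * y x t) \<le> y x t * G x t" using G y0 by (rule mult_left_mono)
      have a2: "y x t * y x t \<le> lv * lv" using ylv y0 by (intro mult_mono) auto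
      have a3: "\<beta> * (y x t * y x t) \<le> \<beta> * (lv * lv)" using a2 \<beta> by simp
      have a4: "\<alpha> * lv = \<beta> * lv * (B * e) + \<beta> * (lv * lv)"
        unfolding lv_def using \<beta> by (simp add: field_simps)
      have a5: "\<gamma> * (B * e) \<le> \<beta> * lv * (B * e)"
        unfolding \<gamma>_def using lvm \<beta> B e by (intro mult_right_mono) auto
      have a7: "y x t * (\<alpha> - \<beta> * y x t) = \<alpha> * y x t - \<beta> * (y x t * y x t)" by (simp add: algebra_simps)
      have hh: "h t = lv" "h' t = \<gamma> * (B * e)" unfolding h_def h'_def lv_def e_def by simp_all
      have a8: "\<alpha> * ((-1) * y x t + lv) = \<alpha> * lv - \<alpha> * y x t" by (simp add: algebra_simps)
      show "(-1) * (y x t * G x t) + h' t \<le> \<alpha> * ((-1) * y x t + h t)"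
        unfolding hh using a1 a3 a4 a5 a7 a8 by linarith
    qed
  qed
  show ?thesis
  proof (intro allI impI)
    fix \<eta> :: real assume \<eta>: "\<eta> > 0"
    obtain T where T: "T \<ge> t0" "\<forall>t\<ge>T. B * exp (-\<gamma> * (t - t0)) < \<eta>"
      using exp_small[OF \<gamma> \<eta>, of B] B by auto
    have "\<forall>t\<ge>T. \<forall>x\<in>closure \<Omega>. y x t \<ge> \<alpha>/\<beta> - \<eta>"
    proof (intro allI impI ballI)
      fix t x assume t: "t \<ge> T" and x: "x \<in> closure \<Omega>"
      have "t \<in> {t0..t}" using T t by simp
      then have "(-1) * y x t + h t \<le> 0" using main[of t] x by blast
      moreover have "B * exp (-\<gamma> * (t - t0)) < \<eta>" using T(2) t by blast
      ultimately show "y x t \<ge> \<alpha>/\<beta> - \<eta>" unfolding h_def by simp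
    qed
    then show "\<exists>T. \<forall>t\<ge>T. \<forall>x\<in>closure \<Omega>. y x t \<ge> \<alpha>/\<beta> - \<eta>" by blast
  qed
qed

lemma min_pos:
  fixes \<Omega> :: "'a::euclidean_space set" and y :: "'a \<Rightarrow> real \<Rightarrow> real" and t0 :: real
  assumes dom: "bounded_C1_domain \<Omega> \<phi>" and cont: "continuous_on (closure \<Omega> \<times> {0..}) (\<lambda>(x,t). y x t)"
    and t0: "t0 \<ge> 0" and pos: "\<forall>x\<in>closure \<Omega>. y x t0 > 0"
  shows "\<exists>m>0. \<forall>x\<in>closure \<Omega>. y x t0 \<ge> m"
proof -
  have bd: "bounded \<Omega>" and ne: "\<Omega> \<noteq> {}" using dom unfolding bounded_C1_domain_def by auto
  have cpt: "compact (closure \<Omega>)" using bd by simp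
  have cne: "closure \<Omega> \<noteq> {}" using ne by simp
  have "continuous_on (closure \<Omega>) ((\<lambda>(x,t). y x t) \<circ> (\<lambda>x. (x, t0)))"
    by (rule continuous_on_compose[OF _ continuous_on_subset[OF cont]]) (use t0 in \<open>auto intro!: continuous_intros\<close>)
  then have "continuous_on (closure \<Omega>) (\<lambda>x. y x t0)" by (simp add: comp_def)
  from continuous_attains_inf[OF cpt cne this] obtain x1 where
    "x1 \<in> closure \<Omega>" "\<forall>x\<in>closure \<Omega>. y x1 t0 \<le> y x t0" by blast
  then show ?thesis using pos by (intro exI[of _ "y x1 t0"]) auto
qed

theorem mainTheorem15:
  fixes \<Omega> :: "'a::euclidean_space set" and \<phi> k :: "'a \<Rightarrow> real"
    and a1 b1 c1 d1 a2 b2 c2 d2 c d :: real and u v :: "'a \<Rightarrow> real \<Rightarrow> real"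
  assumes dom: "bounded_C1_domain \<Omega> \<phi>"
    and k_C1: "C1_on_closure k \<Omega>"
    and k_nonneg: "\<forall>x\<in>closure \<Omega>. k x \<ge> 0"
    and k_zero_null: "{x\<in>closure \<Omega>. k x = 0} \<in> null_sets lebesgue"
    and pos: "a1 > 0" "b1 > 0" "c1 > 0" "d1 > 0" "a2 > 0" "b2 > 0" "c2 > 0" "d2 > 0"
    and init_pos: "c > 0" "d > 0"
    and sol: "is_classical_solution \<Omega> \<phi> k a1 b1 c1 d1 a2 b2 c2 d2 c d u v"
    and hk: "(SUP x\<in>closure \<Omega>. k x) > (a2 * b1\<^sup>2 - c2 * a1 * b1) / (a1\<^sup>2 * c2)"
    and hratio: "a1 / a2 > max (b1 / c2) (c1 / b2)"
  shows "\<forall>\<epsilon>>0. \<exists>T. \<forall>t\<ge>T. \<forall>x\<in>\<Omega>. \<bar>u x t - a1 / b1\<bar> < \<epsilon> \<and> \<bar>v x t\<bar> < \<epsilon>"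
proof -
  note S = sol[unfolded is_classical_solution_def]
  have contu: "continuous_on (closure \<Omega> \<times> {0..}) (\<lambda>(x,t). u x t)"
    and contv: "continuous_on (closure \<Omega> \<times> {0..}) (\<lambda>(x,t). v x t)"
    and initu: "\<forall>x\<in>closure \<Omega>. u x 0 = c" and initv: "\<forall>x\<in>closure \<Omega>. v x 0 = d"
    using S by auto
  have sub: "\<Omega> \<subseteq> closure \<Omega>" by (rule closure_subset)
  define Gu where "Gu x t = a1 - b1 * u x t - c1 * v x t" for x t
  define Gv where "Gv x t = a2 / (1 + k x * u x t) - b2 * v x t - c2 * u x t" for x t
  have scu: "scal \<Omega> \<phi> d1 u Gu"
    unfolding scal_def
  proof (intro conjI)
    show "continuous_on (closure \<Omega> \<times> {0..}) (\<lambda>(x,t). u x t)" by (rule contu)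
    show "\<forall>t>0. \<forall>x\<in>\<Omega>. (\<lambda>z. u z t) differentiable (at x) \<and>
        (\<forall>b\<in>Basis. (\<lambda>z. frechet_derivative (\<lambda>z. u z t) (at z) b) differentiable (at x)) \<and>
        ((\<lambda>s. u x s) has_real_derivative (d1 * laplacian (\<lambda>z. u z t) x + u x t * Gu x t)) (at t)"
    proof (intro allI impI ballI)
      fix t :: real and x assume t: "t > 0" and x: "x \<in> \<Omega>"
      have e: "d1 * laplacian (\<lambda>y. u y t) x + a1 * u x t - b1 * (u x t)\<^sup>2 - c1 * u x t * v x t
          = d1 * laplacian (\<lambda>z. u z t) x + u x t * Gu x t"
        unfolding Gu_def by (simp add: algebra_simps power2_eq_square)
      show "(\<lambda>z. u z t) differentiable (at x) \<and>
        (\<forall>b\<in>Basis. (\<lambda>z. frechet_derivative (\<lambda>z. u z t) (at z) b) differentiable (at x)) \<and>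
        ((\<lambda>s. u x s) has_real_derivative (d1 * laplacian (\<lambda>z. u z t) x + u x t * Gu x t)) (at t)"
        using S t x e by metis
    qed
    show "\<forall>t>0. \<forall>x\<in>frontier \<Omega>. \<exists>D. ((\<lambda>z. u z t) has_derivative D) (at x within closure \<Omega>) \<and> D (grad \<phi> x) = 0"
      using S by blast
  qed
  have scv: "scal \<Omega> \<phi> d2 v Gv"
    unfolding scal_def
  proof (intro conjI)
    show "continuous_on (closure \<Omega> \<times> {0..}) (\<lambda>(x,t). v x t)" by (rule contv)
    show "\<forall>t>0. \<forall>x\<in>\<Omega>. (\<lambda>z. v z t) differentiable (at x) \<and>
        (\<forall>b\<in>Basis. (\<lambda>z. frechet_derivative (\<lambda>z. v z t) (at z) b) differentiable (at x)) \<and>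
        ((\<lambda>s. v x s) has_real_derivative (d2 * laplacian (\<lambda>z. v z t) x + v x t * Gv x t)) (at t)"
    proof (intro allI impI ballI)
      fix t :: real and x assume t: "t > 0" and x: "x \<in> \<Omega>"
      have e: "d2 * laplacian (\<lambda>y. v y t) x + a2 * v x t / (1 + k x * u x t) - b2 * (v x t)\<^sup>2 - c2 * u x t * v x t
          = d2 * laplacian (\<lambda>z. v z t) x + v x t * Gv x t"
        unfolding Gv_def by (simp add: algebra_simps power2_eq_square)
      show "(\<lambda>z. v z t) differentiable (at x) \<and>
        (\<forall>b\<in>Basis. (\<lambda>z. frechet_derivative (\<lambda>z. v z t) (at z) b) differentiable (at x)) \<and>
        ((\<lambda>s. v x s) has_real_derivative (d2 * laplacian (\<lambda>z. v z t) x + v x t * Gv x t)) (at t)"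
        using S t x e by metis
    qed
    show "\<forall>t>0. \<forall>x\<in>frontier \<Omega>. \<exists>D. ((\<lambda>z. v z t) has_derivative D) (at x within closure \<Omega>) \<and> D (grad \<phi> x) = 0"
      using S by blast
  qed
  have d1: "d1 \<ge> 0" and d2: "d2 \<ge> 0" using pos by auto
  have bu: "\<exists>M. \<forall>x\<in>closure \<Omega>. \<forall>t\<in>{0..T}. \<bar>u x t\<bar> \<le> M" for T using scal_bound[OF dom contu] .
  have bv: "\<exists>M. \<forall>x\<in>closure \<Omega>. \<forall>t\<in>{0..T}. \<bar>v x t\<bar> \<le> M" for T using scal_bound[OF dom contv] .
  have upos: "\<forall>t\<ge>0. \<forall>x\<in>closure \<Omega>. u x t > 0"
  proof (rule pos_lemma[OF dom d1 scu init_pos(1)])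
    show "\<forall>x\<in>closure \<Omega>. c \<le> u x 0" using initu by simp
    show "\<forall>T. \<exists>L. \<forall>t\<in>{0<..T}. \<forall>x\<in>\<Omega>. \<bar>Gu x t\<bar> \<le> L"
    proof
      fix T :: real
      obtain Mu where Mu: "\<forall>x\<in>closure \<Omega>. \<forall>t\<in>{0..T}. \<bar>u x t\<bar> \<le> Mu" using bu by blast
      obtain Mv where Mv: "\<forall>x\<in>closure \<Omega>. \<forall>t\<in>{0..T}. \<bar>v x t\<bar> \<le> Mv" using bv by blast
      have "\<bar>Gu x t\<bar> \<le> a1 + b1 * Mu + c1 * Mv" if t: "t \<in> {0<..T}" and x: "x \<in> \<Omega>" for t x
      proof -
        have "\<bar>u x t\<bar> \<le> Mu" "\<bar>v x t\<bar> \<le> Mv" using Mu Mv t x sub by auto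
        then have "b1 * \<bar>u x t\<bar> \<le> b1 * Mu" "c1 * \<bar>v x t\<bar> \<le> c1 * Mv" using pos by auto
        moreover have "\<bar>Gu x t\<bar> \<le> a1 + b1 * \<bar>u x t\<bar> + c1 * \<bar>v x t\<bar>"
        proof -
          have i1: "\<bar>a1 - b1 * u x t - c1 * v x t\<bar> \<le> \<bar>a1 - b1 * u x t\<bar> + \<bar>c1 * v x t\<bar>" by (rule abs_triangle_ineq4)
          have i2: "\<bar>a1 - b1 * u x t\<bar> \<le> \<bar>a1\<bar> + \<bar>b1 * u x t\<bar>" by (rule abs_triangle_ineq4)
          have "\<bar>a1\<bar> = a1" "\<bar>b1 * u x t\<bar> = b1 * \<bar>u x t\<bar>" "\<bar>c1 * v x t\<bar> = c1 * \<bar>v x t\<bar>"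
            using pos by (simp_all add: abs_mult)
          then show ?thesis unfolding Gu_def using i1 i2 by linarith
        qed
        ultimately show ?thesis by linarith
      qed
      then show "\<exists>L. \<forall>t\<in>{0<..T}. \<forall>x\<in>\<Omega>. \<bar>Gu x t\<bar> \<le> L" by blast
    qed
  qed
  have kq: "0 \<le> a2 / (1 + k x * u x t) \<and> a2 / (1 + k x * u x t) \<le> a2" if "t \<ge> 0" "x \<in> \<Omega>" for t x
  proof -
    have "k x \<ge> 0" using k_nonneg that sub by auto
    moreover have "u x t > 0" using upos that sub by auto
    ultimately have "1 + k x * u x t \<ge> 1" by simp
    then show ?thesis using pos by (simp add: divide_le_eq_1 field_simps)
  qed
  have vpos: "\<forall>t\<ge>0. \<forall>x\<in>closure \<Omega>. v x t > 0"
  proof (rule pos_lemma[OF dom d2 scv init_pos(2)])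
    show "\<forall>x\<in>closure \<Omega>. d \<le> v x 0" using initv by simp
    show "\<forall>T. \<exists>L. \<forall>t\<in>{0<..T}. \<forall>x\<in>\<Omega>. \<bar>Gv x t\<bar> \<le> L"
    proof
      fix T :: real
      obtain Mu where Mu: "\<forall>x\<in>closure \<Omega>. \<forall>t\<in>{0..T}. \<bar>u x t\<bar> \<le> Mu" using bu by blast
      obtain Mv where Mv: "\<forall>x\<in>closure \<Omega>. \<forall>t\<in>{0..T}. \<bar>v x t\<bar> \<le> Mv" using bv by blast
      have "\<bar>Gv x t\<bar> \<le> a2 + b2 * Mv + c2 * Mu" if t: "t \<in> {0<..T}" and x: "x \<in> \<Omega>" for t x
      proof -
        have "\<bar>u x t\<bar> \<le> Mu" "\<bar>v x t\<bar> \<le> Mv" using Mu Mv t x sub by auto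
        then have "b2 * \<bar>v x t\<bar> \<le> b2 * Mv" "c2 * \<bar>u x t\<bar> \<le> c2 * Mu" using pos by auto
        moreover have "\<bar>a2 / (1 + k x * u x t)\<bar> \<le> a2"
        proof -
          have "0 \<le> a2 / (1 + k x * u x t)" "a2 / (1 + k x * u x t) \<le> a2" using kq[of t x] t x by auto
          then show ?thesis by (simp only: abs_of_nonneg)
        qed
        moreover have "\<bar>b2 * v x t\<bar> = b2 * \<bar>v x t\<bar>" "\<bar>c2 * u x t\<bar> = c2 * \<bar>u x t\<bar>" using pos by (simp_all add: abs_mult)
        moreover have "\<bar>Gv x t\<bar> \<le> \<bar>a2 / (1 + k x * u x t) - b2 * v x t\<bar> + \<bar>c2 * u x t\<bar>"
          unfolding Gv_def by (rule abs_triangle_ineq4)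
        moreover have "\<bar>a2 / (1 + k x * u x t) - b2 * v x t\<bar> \<le> \<bar>a2 / (1 + k x * u x t)\<bar> + \<bar>b2 * v x t\<bar>"
          by (rule abs_triangle_ineq4)
        ultimately show ?thesis by linarith
      qed
      then show "\<exists>L. \<forall>t\<in>{0<..T}. \<forall>x\<in>\<Omega>. \<bar>Gv x t\<bar> \<le> L" by blast
    qed
  qed
  have nnu: "\<forall>t\<ge>t0. \<forall>x\<in>closure \<Omega>. u x t \<ge> 0" if "t0 \<ge> 0" for t0 :: real
    using upos that by (meson less_imp_le order_trans)
  have nnv: "\<forall>t\<ge>t0. \<forall>x\<in>closure \<Omega>. v x t \<ge> 0" if "t0 \<ge> 0" for t0 :: real
    using vpos that by (meson less_imp_le order_trans)
  have uup: "\<forall>\<eta>>0. \<exists>T. \<forall>t\<ge>T. \<forall>x\<in>closure \<Omega>. u x t \<le> a1/b1 + \<eta>"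
  proof (rule upper_lemma[OF dom d1 scu order_refl nnu[OF order_refl] _ pos(1) pos(2)])
    show "\<forall>t>0. \<forall>x\<in>\<Omega>. Gu x t \<le> a1 - b1 * u x t"
    proof (intro allI impI ballI)
      fix t :: real and x assume "t > 0" "x \<in> \<Omega>"
      then have "v x t > 0" using vpos sub by auto
      then show "Gu x t \<le> a1 - b1 * u x t" unfolding Gu_def using pos by simp
    qed
  qed
  define P where "P V \<longleftrightarrow> (\<forall>\<eta>>0. \<exists>T. \<forall>t\<ge>T. \<forall>x\<in>closure \<Omega>. v x t \<le> V + \<eta>)" for V
  define f where "f V = (a2 - c2 * ((a1 - c1 * V) / b1)) / b2" for V
  have PV0: "P (a2/b2)" unfolding P_def
  proof (rule upper_lemma[OF dom d2 scv order_refl nnv[OF order_refl] _ pos(5) pos(6)])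
    show "\<forall>t>0. \<forall>x\<in>\<Omega>. Gv x t \<le> a2 - b2 * v x t"
    proof (intro allI impI ballI)
      fix t :: real and x assume tx: "t > 0" "x \<in> \<Omega>"
      then have "u x t > 0" using upos sub by auto
      then have "c2 * u x t \<ge> 0" using pos by simp
      moreover have "a2 / (1 + k x * u x t) \<le> a2" using kq tx by auto
      ultimately show "Gv x t \<le> a2 - b2 * v x t" unfolding Gv_def by linarith
    qed
  qed
  have lowstep: "\<exists>T. \<forall>t\<ge>T. \<forall>x\<in>closure \<Omega>. u x t \<ge> (a1 - c1 * V) / b1 - \<eta>"
    if V: "0 \<le> V" "c1 * V < a1" "P V" and \<eta>: "\<eta> > 0" for V \<eta>
  proof -
    define \<eta>1 where "\<eta>1 = min (\<eta> * b1 / (2 * c1)) ((a1 - c1 * V) / (2 * c1))"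
    have \<eta>1: "\<eta>1 > 0" "\<eta>1 \<le> \<eta> * b1 / (2 * c1)" "\<eta>1 \<le> (a1 - c1 * V) / (2 * c1)"
      using \<eta> pos V unfolding \<eta>1_def by auto
    obtain T1 where T1: "\<forall>t\<ge>T1. \<forall>x\<in>closure \<Omega>. v x t \<le> V + \<eta>1" using V(3) \<eta>1(1) unfolding P_def by blast
    define t0 where "t0 = max T1 0"
    have t0: "t0 \<ge> 0" "t0 \<ge> T1" unfolding t0_def by auto
    obtain m where m: "m > 0" "\<forall>x\<in>closure \<Omega>. u x t0 \<ge> m"
      using min_pos[OF dom contu t0(1)] upos t0 by blast
    define \<alpha>1 where "\<alpha>1 = a1 - c1 * (V + \<eta>1)"
    have c1\<eta>1: "c1 * \<eta>1 \<le> (a1 - c1 * V) / 2" using \<eta>1(3) pos by (simp add: field_simps)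
    have \<alpha>1: "\<alpha>1 > 0" unfolding \<alpha>1_def using c1\<eta>1 V(2) by (simp add: algebra_simps)
    have low: "\<forall>\<eta>'>0. \<exists>T. \<forall>t\<ge>T. \<forall>x\<in>closure \<Omega>. u x t \<ge> \<alpha>1/b1 - \<eta>'"
    proof (rule lower_lemma[OF dom d1 scu t0(1) m(1) m(2) nnu[OF t0(1)] _ \<alpha>1 pos(2)])
      show "\<forall>t>t0. \<forall>x\<in>\<Omega>. \<alpha>1 - b1 * u x t \<le> Gu x t"
      proof (intro allI impI ballI)
        fix t x assume tx: "t > t0" "x \<in> \<Omega>"
        then have "v x t \<le> V + \<eta>1" using T1 t0 sub by auto
        then have "c1 * v x t \<le> c1 * (V + \<eta>1)" using pos by simp
        then show "\<alpha>1 - b1 * u x t \<le> Gu x t" unfolding Gu_def \<alpha>1_def by simp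
      qed
    qed
    obtain T where T: "\<forall>t\<ge>T. \<forall>x\<in>closure \<Omega>. u x t \<ge> \<alpha>1/b1 - \<eta>/2" using low \<eta> by (meson half_gt_zero)
    have "c1 * \<eta>1 \<le> \<eta> * b1 / 2" using \<eta>1(2) pos by (simp add: field_simps)
    then have "\<alpha>1/b1 - \<eta>/2 \<ge> (a1 - c1 * V) / b1 - \<eta>"
      unfolding \<alpha>1_def using pos by (simp add: field_simps)
    then show ?thesis using T by (meson order_trans)
  qed
  have step: "P (max (f V) 0)" if V: "0 \<le> V" "c1 * V < a1" "P V" for V
    unfolding P_def
  proof (intro allI impI)
    fix \<eta> :: real assume \<eta>: "\<eta> > 0"
    define \<eta>2 where "\<eta>2 = \<eta> * b2 / (4 * c2)"
    have \<eta>2: "\<eta>2 > 0" using \<eta> pos unfolding \<eta>2_def by simp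
    obtain T2 where T2: "\<forall>t\<ge>T2. \<forall>x\<in>closure \<Omega>. u x t \<ge> (a1 - c1 * V) / b1 - \<eta>2"
      using lowstep[OF V \<eta>2] by blast
    define t0 where "t0 = max T2 0"
    have t0: "t0 \<ge> 0" "t0 \<ge> T2" unfolding t0_def by auto
    define \<alpha>2 where "\<alpha>2 = a2 - c2 * ((a1 - c1 * V) / b1 - \<eta>2)"
    define \<alpha> where "\<alpha> = max \<alpha>2 (b2 * \<eta> / 2)"
    have \<alpha>: "\<alpha> > 0" using pos \<eta> unfolding \<alpha>_def by (simp add: less_max_iff_disj)
    have up: "\<forall>\<eta>'>0. \<exists>T. \<forall>t\<ge>T. \<forall>x\<in>closure \<Omega>. v x t \<le> \<alpha>/b2 + \<eta>'"
    proof (rule upper_lemma[OF dom d2 scv t0(1) nnv[OF t0(1)] _ \<alpha> pos(6)])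
      show "\<forall>t>t0. \<forall>x\<in>\<Omega>. Gv x t \<le> \<alpha> - b2 * v x t"
      proof (intro allI impI ballI)
        fix t x assume tx: "t > t0" "x \<in> \<Omega>"
        then have "u x t \<ge> (a1 - c1 * V) / b1 - \<eta>2" using T2 t0 sub by auto
        then have "c2 * u x t \<ge> c2 * ((a1 - c1 * V) / b1 - \<eta>2)" using pos by simp
        moreover have "a2 / (1 + k x * u x t) \<le> a2" using kq tx t0 by auto
        moreover have "\<alpha>2 \<le> \<alpha>" unfolding \<alpha>_def by simp
        ultimately show "Gv x t \<le> \<alpha> - b2 * v x t" unfolding Gv_def \<alpha>2_def by linarith
      qed
    qed
    obtain T where T: "\<forall>t\<ge>T. \<forall>x\<in>closure \<Omega>. v x t \<le> \<alpha>/b2 + \<eta>/2" using up \<eta> by (meson half_gt_zero)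
    have e2: "\<alpha>2 / b2 = f V + \<eta>/4" unfolding \<alpha>2_def f_def \<eta>2_def using pos by (simp add: field_simps)
    have "\<alpha>/b2 \<le> max (f V) 0 + \<eta>/2"
    proof (cases "\<alpha>2 \<le> b2 * \<eta> / 2")
      case True
      then have "\<alpha> = b2 * \<eta> / 2" unfolding \<alpha>_def by simp
      then have "\<alpha>/b2 = \<eta>/2" using pos by simp
      moreover have "max (f V) 0 \<ge> 0" by simp
      ultimately show ?thesis by linarith
    next
      case False
      then have "\<alpha> = \<alpha>2" unfolding \<alpha>_def by simp
      then show ?thesis using e2 \<eta> by simp
    qed
    then have "\<forall>t\<ge>T. \<forall>x\<in>closure \<Omega>. v x t \<le> max (f V) 0 + \<eta>"
    proof (intro allI impI ballI)
      fix t x assume a: "\<alpha>/b2 \<le> max (f V) 0 + \<eta>/2" and t: "t \<ge> T" and x: "x \<in> closure \<Omega>"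
      have "v x t \<le> \<alpha>/b2 + \<eta>/2" using T t x by blast
      then show "v x t \<le> max (f V) 0 + \<eta>" using a by linarith
    qed
    then show "\<exists>T. \<forall>t\<ge>T. \<forall>x\<in>closure \<Omega>. v x t \<le> max (f V) 0 + \<eta>" by blast
  qed
  define V0 where "V0 = a2 / b2"
  have hr: "b1 / c2 < a1 / a2" "c1 / b2 < a1 / a2" using hratio by auto
  have hr1: "a2 * b1 < a1 * c2" using hr(1) pos by (simp add: field_simps)
  have hr2: "a2 * c1 < a1 * b2" using hr(2) pos by (simp add: field_simps)
  have V0: "V0 > 0" unfolding V0_def using pos by simp
  have cV0: "c1 * V0 < a1" unfolding V0_def using hr2 pos by (simp add: field_simps)
  have f0: "f 0 < 0" unfolding f_def using hr1 pos by (simp add: field_simps)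
  have fV0: "f V0 < V0" unfolding f_def V0_def using hr2 pos by (simp add: field_simps)
  define sl where "sl = c1 * c2 / (b1 * b2)"
  have faff: "f V = f 0 + sl * V" for V unfolding f_def sl_def using pos by (simp add: field_simps)
  define \<delta> where "\<delta> = min (- f 0) (V0 - f V0)"
  have \<delta>: "\<delta> > 0" "\<delta> \<le> - f 0" "\<delta> \<le> V0 - f V0" using f0 fV0 unfolding \<delta>_def by auto
  have key: "f V \<le> V - \<delta>" if "0 \<le> V" "V \<le> V0" for V
  proof (cases "sl \<ge> 1")
    case True
    have "(sl - 1) * V \<le> (sl - 1) * V0" using True that by (intro mult_left_mono) auto
    then have "f V - V \<le> f V0 - V0" using faff[of V] faff[of V0] by (simp add: algebra_simps)
    then show ?thesis using \<delta> by linarith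
  next
    case False
    have "(sl - 1) * V \<le> 0" using False that by (intro mult_nonpos_nonneg) auto
    then have "f V - V \<le> f 0" using faff[of V] by (simp add: algebra_simps)
    then show ?thesis using \<delta> by linarith
  qed
  have ind: "\<exists>V. 0 \<le> V \<and> V \<le> V0 \<and> V \<le> max 0 (V0 - real n * \<delta>) \<and> P V" for n
  proof (induction n)
    case 0
    show ?case using PV0 V0 unfolding V0_def by (intro exI[of _ "a2/b2"]) auto
  next
    case (Suc n)
    then obtain V where V: "0 \<le> V" "V \<le> V0" "V \<le> max 0 (V0 - real n * \<delta>)" "P V" by blast
    have cV: "c1 * V < a1" using V(2) cV0 pos by (smt (verit) mult_left_mono)
    have fV: "f V \<le> V - \<delta>" using key V by auto
    have P': "P (max (f V) 0)" using step[OF V(1) cV V(4)] .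
    have b1': "max (f V) 0 \<le> V0" using fV V \<delta> V0 by auto
    have b2': "max (f V) 0 \<le> max 0 (V0 - real (Suc n) * \<delta>)"
    proof (cases "f V \<le> 0")
      case True then show ?thesis by simp
    next
      case False
      show ?thesis
      proof (cases "V0 - real n * \<delta> \<ge> 0")
        case True
        then have "V \<le> V0 - real n * \<delta>" using V(3) by simp
        then have "f V \<le> V0 - real (Suc n) * \<delta>" using fV by (simp add: algebra_simps)
        then show ?thesis by simp
      next
        case nf: False
        then have "V = 0" using V(1,3) by simp
        then have "f V < 0" using f0 by simp
        then show ?thesis using False by simp
      qed
    qed
    show ?case using P' b1' b2' by (intro exI[of _ "max (f V) 0"]) auto
  qed
  obtain n where n: "V0 < real n * \<delta>" using ex_less_of_nat_mult[OF \<delta>(1)] by blast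
  obtain V where V: "0 \<le> V" "V \<le> max 0 (V0 - real n * \<delta>)" "P V" using ind[of n] by blast
  have "V = 0" using V n by simp
  then have P0: "P 0" using V(3) by simp
  show ?thesis
  proof (intro allI impI)
    fix \<epsilon> :: real assume \<epsilon>: "\<epsilon> > 0"
    obtain Ta where Ta: "\<forall>t\<ge>Ta. \<forall>x\<in>closure \<Omega>. u x t \<ge> (a1 - c1 * 0) / b1 - \<epsilon>/2"
      using lowstep[OF order_refl _ P0, of "\<epsilon>/2"] pos \<epsilon> by auto
    obtain Tb where Tb: "\<forall>t\<ge>Tb. \<forall>x\<in>closure \<Omega>. u x t \<le> a1 / b1 + \<epsilon>/2"
      using uup \<epsilon> by (meson half_gt_zero)
    obtain Tc where Tc: "\<forall>t\<ge>Tc. \<forall>x\<in>closure \<Omega>. v x t \<le> 0 + \<epsilon>/2"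
      using P0 \<epsilon> unfolding P_def by (meson half_gt_zero)
    define T where "T = max (max Ta Tb) (max Tc 0)"
    have "\<forall>t\<ge>T. \<forall>x\<in>\<Omega>. \<bar>u x t - a1 / b1\<bar> < \<epsilon> \<and> \<bar>v x t\<bar> < \<epsilon>"
    proof (intro allI impI ballI)
      fix t x assume t: "t \<ge> T" and x: "x \<in> \<Omega>"
      have xc: "x \<in> closure \<Omega>" using x sub by auto
      have "u x t \<ge> a1 / b1 - \<epsilon>/2" using Ta t xc unfolding T_def by auto
      moreover have "u x t \<le> a1 / b1 + \<epsilon>/2" using Tb t xc unfolding T_def by auto
      moreover have "v x t \<le> \<epsilon>/2" using Tc t xc unfolding T_def by auto
      moreover have "v x t > 0" using vpos t xc unfolding T_def by auto
      ultimately show "\<bar>u x t - a1 / b1\<bar> < \<epsilon> \<and> \<bar>v x t\<bar> < \<epsilon>" using \<epsilon> by (simp add: abs_less_iff)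
    qed
    then show "\<exists>T. \<forall>t\<ge>T. \<forall>x\<in>\<Omega>. \<bar>u x t - a1 / b1\<bar> < \<epsilon> \<and> \<bar>v x t\<bar> < \<epsilon>" by blast
  qed
qed

end
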